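(* Let $\psi$ be a simple, continuous, translation-invariant valuation on the set $\mathcal{C}_n$ of compact $\ell_1$-convex subsets of $\mathbb{R}^n$. Then $\psi=c\,\mathrm{Vol}_n$ for some $c\in\mathbb{R}$, where $\mathrm{Vol}_n$ is Lebesgue measure.
   Context: A subset $Z\subseteq\mathbb{R}^n$ is $\ell_1$-convex if for all $z,z'\in Z$, with $D=\sum_i|z_i-z'_i|$, there is $\gamma\colon[0,D]\to Z$ with $\gamma(0)=z,\gamma(D)=z'$ and $\sum_i|\gamma_i(t)-\gamma_i(t')|=|t-t'|$ for all $t,t'$. A valuation on $\mathcal{C}_n$ is $\phi\colon\mathcal{C}_n\to\mathbb{R}$ with $\phi(\emptyset)=0$ and $\phi(X\cup Y)=\phi(X)+\phi(Y)-\phi(X\cap Y)$ whenever $X,Y,X\cup Y,X\cap Y\in\mathcal{C}_n$; continuity is with respect to the Hausdorff metric; translation-invariance means $\phi(X+a)=\phi(X)$. The dimension of a nonempty $\ell_1$-convex $X$ is the least $i$ such that $X\subseteq P+q$ for some $i$-dimensional coordinate subspace $P$ (spanned by $i$ standard basis vectors) and $q\in\mathbb{R}^n$. A valuation is simple if it vanishes on all $X\in\mathcal{C}_n$ of dimension less than $n$. *)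

theory Defs
  imports "HOL-Analysis.Analysis"
begin

text \<open>Points of R^n are modelled as real ^ 'n, with 'n a finite index type (n = CARD('n)).\<close>

definition l1_dist :: "real ^ 'n \<Rightarrow> real ^ 'n \<Rightarrow> real" where
  "l1_dist z z' = (\<Sum>i\<in>UNIV. \<bar>z $ i - z' $ i\<bar>)"

definition l1_convex :: "(real ^ 'n) set \<Rightarrow> bool" where
  "l1_convex Z \<longleftrightarrow> (\<forall>z\<in>Z. \<forall>z'\<in>Z.
     (\<exists>\<gamma> :: real \<Rightarrow> real ^ 'n.
        \<gamma> 0 = z \<and> \<gamma> (l1_dist z z') = z' \<and>
        (\<forall>t\<in>{0..l1_dist z z'}. \<gamma> t \<in> Z) \<and>
        (\<forall>t\<in>{0..l1_dist z z'}. \<forall>t'\<in>{0..l1_dist z z'}.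
            l1_dist (\<gamma> t) (\<gamma> t') = \<bar>t - t'\<bar>)))"

definition Cn :: "(real ^ 'n) set set" where
  "Cn = {X. compact X \<and> l1_convex X}"

definition valuation :: "((real ^ 'n) set \<Rightarrow> real) \<Rightarrow> bool" where
  "valuation \<phi> \<longleftrightarrow> \<phi> {} = 0 \<and>
     (\<forall>X Y. X \<in> Cn \<and> Y \<in> Cn \<and> X \<union> Y \<in> Cn \<and> X \<inter> Y \<in> Cn \<longrightarrow>
        \<phi> (X \<union> Y) = \<phi> X + \<phi> Y - \<phi> (X \<inter> Y))"

definition hausdorff_dist :: "(real ^ 'n) set \<Rightarrow> (real ^ 'n) set \<Rightarrow> real" where
  "hausdorff_dist X Y = max (SUP x\<in>X. infdist x Y) (SUP y\<in>Y. infdist y X)"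

text \<open>Continuity w.r.t. the Hausdorff metric on C_n (the empty set is an isolated point).\<close>
definition hausdorff_continuous :: "((real ^ 'n) set \<Rightarrow> real) \<Rightarrow> bool" where
  "hausdorff_continuous \<phi> \<longleftrightarrow>
     (\<forall>X\<in>Cn. X \<noteq> {} \<longrightarrow> (\<forall>e>0. \<exists>d>0. \<forall>Y\<in>Cn. Y \<noteq> {} \<longrightarrow>
         hausdorff_dist X Y < d \<longrightarrow> \<bar>\<phi> Y - \<phi> X\<bar> < e))"

definition translation_invariant :: "((real ^ 'n) set \<Rightarrow> real) \<Rightarrow> bool" where
  "translation_invariant \<phi> \<longleftrightarrow> (\<forall>X\<in>Cn. \<forall>a. \<phi> ((\<lambda>x. x + a) ` X) = \<phi> X)"

definition l1_dim :: "(real ^ 'n) set \<Rightarrow> nat" where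
  "l1_dim X = (LEAST i. \<exists>(I :: 'n set) (q :: real ^ 'n). card I = i \<and>
       X \<subseteq> (\<lambda>p. p + q) ` span ((\<lambda>j. axis j 1) ` I))"

definition simple_valuation :: "((real ^ 'n) set \<Rightarrow> real) \<Rightarrow> bool" where
  "simple_valuation \<phi> \<longleftrightarrow>
     (\<forall>X\<in>Cn. X \<noteq> {} \<longrightarrow> l1_dim X < CARD('n) \<longrightarrow> \<phi> X = 0)"

end

theory Submission
  imports Defs
begin

lemma l1_sym: "l1_dist x y = l1_dist y x"
  unfolding l1_dist_def by (simp add: abs_minus_commute)

lemma l1_self[simp]: "l1_dist x x = 0"
  unfolding l1_dist_def by simp

lemma l1_nonneg: "0 \<le> l1_dist x y"
  unfolding l1_dist_def by (simp add: sum_nonneg)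

lemma l1_comp: "\<bar>x$i - y$i\<bar> \<le> l1_dist x y"
  unfolding l1_dist_def by (rule member_le_sum) auto

lemma l1_triangle: "l1_dist x z \<le> l1_dist x y + l1_dist y z"
  unfolding l1_dist_def sum.distrib[symmetric] by (rule sum_mono) simp

lemma l1_zero_iff: "l1_dist x y = 0 \<longleftrightarrow> x = y"
proof
  assume "l1_dist x y = 0"
  then have "\<forall>i\<in>UNIV. \<bar>x$i - y$i\<bar> = 0" unfolding l1_dist_def
    by (subst sum_nonneg_eq_0_iff[symmetric]) auto
  then show "x = y" by (simp add: vec_eq_iff)
qed simp

lemma dist_le_l1: "dist x y \<le> l1_dist x y"
  unfolding dist_norm l1_dist_def using norm_le_l1_cart[of "x - y"] by simp

lemma continuous_on_l1[continuous_intros]: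
  assumes "continuous_on S f" "continuous_on S g"
  shows "continuous_on S (\<lambda>t. l1_dist (f t) (g t))"
  unfolding l1_dist_def by (intro continuous_intros assms)

definition btw :: "real \<Rightarrow> real \<Rightarrow> real \<Rightarrow> real \<Rightarrow> bool" where
  "btw a b c d \<longleftrightarrow> \<bar>a - b\<bar> + \<bar>b - c\<bar> + \<bar>c - d\<bar> = \<bar>a - d\<bar>"

lemma btw_l1:
  "l1_dist z a + l1_dist a b + l1_dist b z' = l1_dist z z' \<longleftrightarrow> (\<forall>i. btw (z$i) (a$i) (b$i) (z'$i))"
proof
  assume H: "l1_dist z a + l1_dist a b + l1_dist b z' = l1_dist z z'"
  let ?f = "\<lambda>i. \<bar>z$i - a$i\<bar> + \<bar>a$i - b$i\<bar> + \<bar>b$i - z'$i\<bar> - \<bar>z$i - z'$i\<bar>"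
  have "sum ?f UNIV = 0" using H unfolding l1_dist_def by (simp add: sum.distrib sum_subtractf)
  moreover have "\<forall>i\<in>UNIV. 0 \<le> ?f i" by (auto simp: abs_if)
  ultimately have "\<forall>i\<in>UNIV. ?f i = 0" by (subst sum_nonneg_eq_0_iff[symmetric]) auto
  then show "\<forall>i. btw (z$i) (a$i) (b$i) (z'$i)" by (auto simp: btw_def)
next
  assume "\<forall>i. btw (z$i) (a$i) (b$i) (z'$i)"
  then show "l1_dist z a + l1_dist a b + l1_dist b z' = l1_dist z z'"
    unfolding l1_dist_def btw_def sum.distrib[symmetric] by simp
qed

definition mpath :: "(real ^ 'n) set \<Rightarrow> (real \<Rightarrow> real ^ 'n) \<Rightarrow> real ^ 'n \<Rightarrow> real ^ 'n \<Rightarrow> bool" where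
  "mpath X q z z' \<longleftrightarrow> continuous_on {0..1} q \<and> q 0 = z \<and> q 1 = z' \<and> q ` {0..1} \<subseteq> X \<and>
     (\<forall>t t'. 0 \<le> t \<longrightarrow> t \<le> t' \<longrightarrow> t' \<le> 1 \<longrightarrow>
        l1_dist z (q t) + l1_dist (q t) (q t') + l1_dist (q t') z' = l1_dist z z')"

lemma l1_convexI:
  assumes "\<And>z z'. z \<in> X \<Longrightarrow> z' \<in> X \<Longrightarrow> \<exists>q. mpath X q z z'"
  shows "l1_convex X"
  unfolding l1_convex_def
proof (intro ballI)
  fix z z' assume zX: "z \<in> X" and z'X: "z' \<in> X"
  then obtain q where q: "mpath X q z z'" using assms by blast
  define D where "D = l1_dist z z'"
  define s where "s = (\<lambda>t. l1_dist z (q t))"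
  have cq: "continuous_on {0..1} q" and q0: "q 0 = z" and q1: "q 1 = z'" and qX: "q ` {0..1} \<subseteq> X"
    and bt: "\<And>t t'. 0 \<le> t \<Longrightarrow> t \<le> t' \<Longrightarrow> t' \<le> 1 \<Longrightarrow>
        l1_dist z (q t) + l1_dist (q t) (q t') + l1_dist (q t') z' = l1_dist z z'"
    using q unfolding mpath_def by auto
  have cs: "continuous_on {0..1} s" unfolding s_def by (intro continuous_intros cq)
  have s0: "s 0 = 0" using q0 by (simp add: s_def)
  have s1: "s 1 = D" using q1 by (simp add: s_def D_def)
  have add: "s t' = s t + l1_dist (q t) (q t')" if "0 \<le> t" "t \<le> t'" "t' \<le> 1" for t t'
  proof -
    have "l1_dist z z' \<le> l1_dist z (q t') + l1_dist (q t') z'" by (rule l1_triangle)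
    moreover have "l1_dist z (q t') \<le> l1_dist z (q t) + l1_dist (q t) (q t')" by (rule l1_triangle)
    ultimately show ?thesis using bt[OF that] by (simp add: s_def)
  qed
  have ex: "\<exists>t. 0 \<le> t \<and> t \<le> 1 \<and> s t = u" if "0 \<le> u" "u \<le> D" for u
    using IVT'[of s 0 u 1] cs s0 s1 that by auto
  define T where "T = (\<lambda>u. SOME t. 0 \<le> t \<and> t \<le> 1 \<and> s t = u)"
  have T: "0 \<le> T u \<and> T u \<le> 1 \<and> s (T u) = u" if "0 \<le> u" "u \<le> D" for u
    unfolding T_def using someI_ex[OF ex[OF that]] .
  define g where "g = (\<lambda>u. q (T u))"
  have D0: "0 \<le> D" unfolding D_def by (rule l1_nonneg)
  have g0: "g 0 = z"
  proof -
    have "l1_dist z (g 0) = 0" using T[of 0] D0 by (simp add: g_def s_def)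
    then show ?thesis by (simp add: l1_zero_iff)
  qed
  have gD: "g D = z'"
  proof -
    have "s (T D) = D" "0 \<le> T D" "T D \<le> 1" using T[of D] D0 by auto
    with bt[of "T D" 1] q1 have "l1_dist (g D) z' = 0"
      by (simp add: g_def s_def D_def)
    then show ?thesis by (simp add: l1_zero_iff)
  qed
  have gX: "g t \<in> X" if "t \<in> {0..D}" for t
    using T[of t] that qX by (auto simp: g_def)
  have gd: "l1_dist (g t) (g t') = \<bar>t - t'\<bar>" if "t \<in> {0..D}" "t' \<in> {0..D}" for t t'
  proof -
    have *: "l1_dist (g u) (g u') = \<bar>u - u'\<bar>" if "u \<in> {0..D}" "u' \<in> {0..D}" "T u \<le> T u'" for u u'
    proof -
      have "u' = u + l1_dist (g u) (g u')"
        using add[of "T u" "T u'"] T[of u] T[of u'] that by (auto simp: g_def)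
      then show ?thesis using l1_nonneg[of "g u" "g u'"] by simp
    qed
    show ?thesis
    proof (cases "T t \<le> T t'")
      case True then show ?thesis using * that by blast
    next
      case False then show ?thesis using *[of t' t] that by (simp add: l1_sym abs_minus_commute)
    qed
  qed
  show "\<exists>\<gamma>. \<gamma> 0 = z \<and> \<gamma> (l1_dist z z') = z' \<and> (\<forall>t\<in>{0..l1_dist z z'}. \<gamma> t \<in> X) \<and>
      (\<forall>t\<in>{0..l1_dist z z'}. \<forall>t'\<in>{0..l1_dist z z'}. l1_dist (\<gamma> t) (\<gamma> t') = \<bar>t - t'\<bar>)"
    using g0 gD gX gd unfolding D_def by blast
qed

lemma l1_convexD:
  assumes "l1_convex X" "z \<in> X" "z' \<in> X"
  shows "\<exists>q. mpath X q z z'"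
proof -
  define D where "D = l1_dist z z'"
  obtain g where g0: "g 0 = z" and gD: "g D = z'" and gX: "\<forall>t\<in>{0..D}. g t \<in> X"
    and gd: "\<forall>t\<in>{0..D}. \<forall>t'\<in>{0..D}. l1_dist (g t) (g t') = \<bar>t - t'\<bar>"
    using assms unfolding l1_convex_def D_def by blast
  have D0: "0 \<le> D" unfolding D_def by (rule l1_nonneg)
  define q where "q = (\<lambda>t. g (D * t))"
  have inD: "D * t \<in> {0..D}" if "t \<in> {0..1}" for t
    using that D0 by (auto simp: mult_left_le)
  have cg: "continuous_on {0..D} g"
    unfolding continuous_on_iff
  proof (intro ballI allI impI)
    fix x e assume "x \<in> {0..D}" "(0::real) < e"
    then show "\<exists>d>0. \<forall>x'\<in>{0..D}. dist x' x < d \<longrightarrow> dist (g x') (g x) < e"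
    proof (intro exI[of _ e] conjI ballI impI)
      fix x' assume "x' \<in> {0..D}" "dist x' x < e"
      then have "l1_dist (g x') (g x) < e" using gd \<open>x \<in> {0..D}\<close> by (simp add: dist_real_def)
      then show "dist (g x') (g x) < e" using dist_le_l1 le_less_trans by blast
    qed (use \<open>0 < e\<close> in simp)
  qed
  have cq: "continuous_on {0..1} q" unfolding q_def
    by (rule continuous_on_compose2[OF cg]) (use inD in \<open>auto intro!: continuous_intros\<close>)
  have bt: "l1_dist z (q t) + l1_dist (q t) (q t') + l1_dist (q t') z' = l1_dist z z'"
    if "0 \<le> t" "t \<le> t'" "t' \<le> 1" for t t'
  proof -
    have a: "D*t \<in> {0..D}" "D*t' \<in> {0..D}" using inD that by auto
    have "D*t \<le> D*t'" using that D0 by (simp add: mult_left_mono)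
    have e0: "0 \<in> {0..D}" "D \<in> {0..D}" using D0 by auto
    have "l1_dist z (q t) = D*t" using gd a e0 g0 by (force simp: q_def)
    moreover have "l1_dist (q t) (q t') = D*t' - D*t" using gd a \<open>D*t \<le> D*t'\<close> by (force simp: q_def)
    moreover have "l1_dist (q t') z' = D - D*t'" using gd a e0 gD by (force simp: q_def)
    ultimately show ?thesis by (simp add: D_def)
  qed
  show ?thesis unfolding mpath_def
    using cq bt g0 gD gX inD by (intro exI[of _ q]) (auto simp: q_def)
qed

definition cclosed :: "(real ^ 'n) set \<Rightarrow> bool" where
  "cclosed C \<longleftrightarrow> (\<forall>z\<in>C. \<forall>z'\<in>C. \<forall>y. (\<forall>i. min (z$i) (z'$i) \<le> y$i \<and> y$i \<le> max (z$i) (z'$i)) \<longrightarrow> y \<in> C)"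

lemma btw_mid: "btw a b b d \<Longrightarrow> min a d \<le> b \<and> b \<le> max a d"
  unfolding btw_def by (auto simp: abs_if split: if_splits)

lemma l1_convex_Int:
  assumes X: "l1_convex X" and C: "cclosed C"
  shows "l1_convex (X \<inter> C)"
proof (rule l1_convexI)
  fix z z' assume "z \<in> X \<inter> C" "z' \<in> X \<inter> C"
  then obtain q where q: "mpath X q z z'" using l1_convexD[OF X] by blast
  have "q t \<in> C" if "t \<in> {0..1}" for t
  proof -
    have "l1_dist z (q t) + l1_dist (q t) (q t) + l1_dist (q t) z' = l1_dist z z'"
      using q that unfolding mpath_def by auto
    then have "\<forall>i. btw (z$i) (q t$i) (q t$i) (z'$i)" by (rule btw_l1[THEN iffD1])
    then show ?thesis using C \<open>z \<in> X \<inter> C\<close> \<open>z' \<in> X \<inter> C\<close> btw_mid unfolding cclosed_def by blast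
  qed
  then have "mpath (X \<inter> C) q z z'" using q unfolding mpath_def by auto
  then show "\<exists>q. mpath (X \<inter> C) q z z'" by blast
qed

lemma l1_convex_UNIV: "l1_convex (UNIV :: (real^'n) set)"
proof (rule l1_convexI)
  fix z z' :: "real^'n"
  define q where "q = (\<lambda>t::real. z + t *\<^sub>R (z' - z))"
  have "btw (z$i) (q t $ i) (q t' $ i) (z'$i)" if "0 \<le> t" "t \<le> t'" "t' \<le> 1" for t t' i
  proof -
    define d where "d = z'$i - z$i"
    have "\<bar>z$i - q t$i\<bar> = t * \<bar>d\<bar>" using that by (simp add: q_def d_def abs_mult)
    moreover have "\<bar>q t$i - q t'$i\<bar> = (t' - t) * \<bar>d\<bar>"
    proof -
      have "q t$i - q t'$i = (t - t') * d" by (simp add: q_def d_def algebra_simps)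
      then show ?thesis using that by (simp add: abs_mult)
    qed
    moreover have "\<bar>q t'$i - z'$i\<bar> = (1 - t') * \<bar>d\<bar>"
    proof -
      have "q t'$i - z'$i = (t' - 1) * d" by (simp add: q_def d_def algebra_simps)
      then show ?thesis using that by (simp add: abs_mult)
    qed
    ultimately show ?thesis unfolding btw_def by (simp add: d_def abs_minus_commute algebra_simps)
  qed
  then have "mpath UNIV q z z'" unfolding mpath_def
    by (auto simp: q_def intro!: continuous_intros btw_l1[THEN iffD2])
  then show "\<exists>q. mpath UNIV q z z'" by blast
qed

lemma cclosed_le: "cclosed {x::real^'n. x$i \<le> s}" unfolding cclosed_def by (auto, smt (verit))
lemma cclosed_ge: "cclosed {x::real^'n. s \<le> x$i}" unfolding cclosed_def by (auto, smt (verit))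
lemma cclosed_eq: "cclosed {x::real^'n. x$i = s}" unfolding cclosed_def by (auto, smt (verit))
lemma cclosed_slab: "cclosed {x::real^'n. a \<le> x$i \<and> x$i \<le> b}" unfolding cclosed_def
  by (auto, smt (verit), smt (verit))
lemma cclosed_cbox: "cclosed (cbox a (b::real^'n))" unfolding cclosed_def cbox_def
  by (auto simp: Basis_vec_def cart_eq_inner_axis[symmetric] inner_axis'; smt (verit))

lemma closed_comp_le: "closed {x::real^'n. x$i \<le> s}"
  by (rule closed_Collect_le) (auto intro!: continuous_intros)
lemma closed_comp_ge: "closed {x::real^'n. s \<le> x$i}"
  by (rule closed_Collect_le) (auto intro!: continuous_intros)
lemma closed_comp_eq: "closed {x::real^'n. x$i = s}"
  by (rule closed_Collect_eq) (auto intro!: continuous_intros)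
lemma closed_comp_slab: "closed {x::real^'n. a \<le> x$i \<and> x$i \<le> b}"
  using closed_Int[OF closed_comp_ge[of a i] closed_comp_le[of i b]] by (simp add: Collect_conj_eq)

lemma Cn_Int:
  assumes "X \<in> Cn" "closed C" "cclosed C"
  shows "X \<inter> C \<in> Cn"
  using assms l1_convex_Int compact_Int_closed unfolding Cn_def by blast

lemma Cn_cbox: "cbox a b \<in> Cn"
proof -
  have "UNIV \<inter> cbox a b \<in> Cn" using l1_convex_Int[OF l1_convex_UNIV cclosed_cbox]
    unfolding Cn_def by auto
  then show ?thesis by simp
qed

lemma Cn_empty: "{} \<in> Cn" unfolding Cn_def l1_convex_def by auto

lemma dim_hyperplane:
  assumes "X \<subseteq> {x::real^'n. x$i = t}"
  shows "l1_dim X < CARD('n)"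
proof -
  let ?I = "UNIV - {i}"
  have sub: "X \<subseteq> (\<lambda>p. p + axis i t) ` span ((\<lambda>j. axis j 1) ` ?I)"
  proof
    fix x assume "x \<in> X"
    then have xi: "x$i = t" using assms by auto
    define v where "v = x - axis i t"
    have vi: "v$i = 0" using xi by (simp add: v_def)
    have "v = (\<Sum>j\<in>UNIV. v$j *s axis j 1)" by (simp add: basis_expansion)
    also have "\<dots> = (\<Sum>j\<in>?I. v$j *s axis j 1)"
      by (subst sum.remove[of UNIV i]) (auto simp: vi)
    finally have "v \<in> span ((\<lambda>j. axis j 1) ` ?I)"
      by (metis (no_types, lifting) image_eqI span_base span_scale span_sum scalar_mult_eq_scaleR)
    moreover have "x = v + axis i t" by (simp add: v_def)
    ultimately show "x \<in> (\<lambda>p. p + axis i t) ` span ((\<lambda>j. axis j 1) ` ?I)" by blast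
  qed
  have "l1_dim X \<le> card ?I" unfolding l1_dim_def
    by (rule Least_le) (use sub in blast)
  also have "card ?I < CARD('n)" by (simp add: card_Diff_singleton)
  finally show ?thesis .
qed

lemma psi_zero_hyperplane:
  assumes "valuation \<psi>" "simple_valuation \<psi>" "X \<in> Cn" "X \<subseteq> {x::real^'n. x$i = t}"
  shows "\<psi> X = 0"
  using assms dim_hyperplane[OF assms(4)] unfolding valuation_def simple_valuation_def by auto

lemma psi_cut:
  assumes val: "valuation \<psi>" and sim: "simple_valuation \<psi>" and Y: "Y \<in> Cn"
  shows "\<psi> Y = \<psi> (Y \<inter> {x::real^'n. x$i \<le> s}) + \<psi> (Y \<inter> {x. s \<le> x$i})"
proof -
  let ?A = "Y \<inter> {x::real^'n. x$i \<le> s}" and ?B = "Y \<inter> {x. s \<le> x$i}"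
  have A: "?A \<in> Cn" by (rule Cn_Int[OF Y closed_comp_le cclosed_le])
  have B: "?B \<in> Cn" by (rule Cn_Int[OF Y closed_comp_ge cclosed_ge])
  have U: "?A \<union> ?B = Y" by auto
  have I: "?A \<inter> ?B = Y \<inter> {x. x$i = s}" by auto
  have IC: "?A \<inter> ?B \<in> Cn" unfolding I by (rule Cn_Int[OF Y closed_comp_eq cclosed_eq])
  have "\<psi> (?A \<inter> ?B) = 0" by (rule psi_zero_hyperplane[OF val sim IC, where i=i and t=s]) (auto simp: I)
  moreover have "\<psi> (?A \<union> ?B) = \<psi> ?A + \<psi> ?B - \<psi> (?A \<inter> ?B)"
    using val A B IC Y U unfolding valuation_def by metis
  ultimately show ?thesis using U by simp
qed

lemma negligible_hyp: "negligible {x::real^'n. x$i = s}"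
proof -
  have "{x::real^'n. x$i = s} = {x. axis i 1 \<bullet> x = s}" by (simp add: inner_axis')
  then show ?thesis using negligible_hyperplane[of "axis i (1::real)" s] by simp
qed

lemma vol_cut:
  assumes Y: "compact (Y::(real^'n) set)"
  shows "measure lebesgue Y = measure lebesgue (Y \<inter> {x. x$i \<le> s}) + measure lebesgue (Y \<inter> {x. s \<le> x$i})"
proof -
  let ?A = "Y \<inter> {x::real^'n. x$i \<le> s}" and ?B = "Y \<inter> {x. s \<le> x$i}"
  have A: "?A \<in> lmeasurable" by (rule lmeasurable_compact) (use Y compact_Int_closed closed_comp_le in blast)
  have B: "?B \<in> lmeasurable" by (rule lmeasurable_compact) (use Y compact_Int_closed closed_comp_ge in blast)
  have "negligible (?A \<inter> ?B)" by (rule negligible_subset[OF negligible_hyp[of i s]]) auto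
  then have "measure lebesgue (?A \<inter> ?B) = 0" by (rule negligible_imp_measure0)
  moreover have "?A \<union> ?B = Y" by auto
  ultimately show ?thesis using measure_Un3[OF A B] by simp
qed

lemma away_from_hyp:
  assumes "compact (K::(real^'n) set)" "\<forall>y\<in>K. y$i \<noteq> t"
  shows "\<exists>m>0. \<forall>y\<in>K. m \<le> \<bar>y$i - t\<bar>"
proof (cases "K = {}")
  case True then show ?thesis by (intro exI[of _ 1]) auto
next
  case False
  have "continuous_on K (\<lambda>y. \<bar>y$i - t\<bar>)" by (intro continuous_intros)
  then obtain y0 where "y0 \<in> K" "\<forall>y\<in>K. \<bar>y0$i - t\<bar> \<le> \<bar>y$i - t\<bar>"
    using continuous_attains_inf[OF assms(1) False] by blast
  then show ?thesis using assms(2) by (intro exI[of _ "\<bar>y0$i - t\<bar>"]) auto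
qed

lemma hausdorff_le:
  assumes "Z \<noteq> {}" "Z \<subseteq> W" "\<forall>y\<in>W. infdist y Z \<le> r" "0 \<le> r"
  shows "hausdorff_dist Z W \<le> r"
proof -
  have W: "W \<noteq> {}" using assms by auto
  have "(SUP x\<in>Z. infdist x W) \<le> r"
    using assms by (intro cSUP_least) auto
  moreover have "(SUP y\<in>W. infdist y Z) \<le> r"
    using assms W by (intro cSUP_least) auto
  ultimately show ?thesis unfolding hausdorff_dist_def by simp
qed

lemma slab_small:
  assumes val: "valuation \<psi>" and sim: "simple_valuation \<psi>" and con: "hausdorff_continuous \<psi>"
    and Y: "Y \<in> Cn" and e: "e > 0"
  shows "\<exists>\<epsilon>>0. \<bar>\<psi> (Y \<inter> {x::real^'n. t - \<epsilon> \<le> x$i \<and> x$i \<le> t + \<epsilon>})\<bar> < e"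
proof -
  let ?S = "\<lambda>\<epsilon>. {x::real^'n. t - \<epsilon> \<le> x$i \<and> x$i \<le> t + \<epsilon>}"
  define Z0 where "Z0 = Y \<inter> {x. x$i = t}"
  have Z0C: "Z0 \<in> Cn" unfolding Z0_def by (rule Cn_Int[OF Y closed_comp_eq cclosed_eq])
  have cY: "compact Y" using Y by (simp add: Cn_def)
  have WC: "Y \<inter> ?S \<epsilon> \<in> Cn" for \<epsilon> by (rule Cn_Int[OF Y closed_comp_slab cclosed_slab])
  show ?thesis
  proof (cases "Z0 = {}")
    case True
    then have "\<forall>y\<in>Y. y$i \<noteq> t" by (auto simp: Z0_def)
    then obtain m where m: "m > 0" "\<forall>y\<in>Y. m \<le> \<bar>y$i - t\<bar>" using away_from_hyp[OF cY] by blast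
    have "Y \<inter> ?S (m/2) = {}"
    proof (rule ccontr)
      assume "Y \<inter> ?S (m/2) \<noteq> {}"
      then obtain y where "y \<in> Y" "t - m/2 \<le> y$i" "y$i \<le> t + m/2" by auto
      then show False using m by force
    qed
    then show ?thesis using val e m unfolding valuation_def by (intro exI[of _ "m/2"]) auto
  next
    case False
    have psi0: "\<psi> Z0 = 0" by (rule psi_zero_hyperplane[OF val sim Z0C, where i=i and t=t]) (auto simp: Z0_def)
    obtain d where d: "d > 0" and dH: "\<forall>W\<in>Cn. W \<noteq> {} \<longrightarrow> hausdorff_dist Z0 W < d \<longrightarrow> \<bar>\<psi> W - \<psi> Z0\<bar> < e"
      using con Z0C False e unfolding hausdorff_continuous_def by blast
    define K where "K = Y \<inter> {y. d/2 \<le> infdist y Z0}"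
    have cK: "compact K" unfolding K_def
      by (rule compact_Int_closed[OF cY]) (auto intro!: closed_Collect_le continuous_intros)
    have "\<forall>y\<in>K. y$i \<noteq> t"
    proof
      fix y assume "y \<in> K"
      show "y$i \<noteq> t"
      proof
        assume "y$i = t"
        then have "y \<in> Z0" using \<open>y \<in> K\<close> by (auto simp: K_def Z0_def)
        then show False using \<open>y \<in> K\<close> d by (auto simp: K_def)
      qed
    qed
    then obtain m where m: "m > 0" "\<forall>y\<in>K. m \<le> \<bar>y$i - t\<bar>" using away_from_hyp[OF cK] by blast
    define W where "W = Y \<inter> ?S (m/2)"
    have Z0W: "Z0 \<subseteq> W" using m by (auto simp: Z0_def W_def)
    have "\<forall>y\<in>W. infdist y Z0 \<le> d/2"
    proof
      fix y assume "y \<in> W"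
      show "infdist y Z0 \<le> d/2"
      proof (rule ccontr)
        assume "\<not> infdist y Z0 \<le> d/2"
        then have "y \<in> K" using \<open>y \<in> W\<close> by (auto simp: K_def W_def)
        then show False using m \<open>y \<in> W\<close> by (force simp: W_def)
      qed
    qed
    then have "hausdorff_dist Z0 W \<le> d/2" using hausdorff_le[OF False Z0W, of "d/2"] d by linarith
    moreover have "W \<noteq> {}" using Z0W False by blast
    moreover have "W \<in> Cn" unfolding W_def by (rule WC)
    ultimately have "\<bar>\<psi> W - \<psi> Z0\<bar> < e" using dH d by force
    then show ?thesis using psi0 m unfolding W_def by (intro exI[of _ "m/2"]) auto
  qed
qed

lemma psi_zero_hyps:
  assumes val: "valuation \<psi>" and sim: "simple_valuation \<psi>" and con: "hausdorff_continuous \<psi>"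
    and H: "finite H"
  shows "\<forall>Y\<in>Cn. Y \<subseteq> {x::real^'n. \<exists>(i,t)\<in>H. x$i = t} \<longrightarrow> \<psi> Y = 0"
  using H
proof (induction H rule: finite_induct)
  case empty
  then show ?case using val unfolding valuation_def by auto
next
  case (insert p H)
  obtain i t where p: "p = (i,t)" by fastforce
  show ?case
  proof (intro ballI impI)
    fix Y assume Y: "Y \<in> Cn" and sub: "Y \<subseteq> {x::real^'n. \<exists>(i,t)\<in>insert p H. x$i = t}"
    let ?S = "\<lambda>\<epsilon>. {x::real^'n. t - \<epsilon> \<le> x$i \<and> x$i \<le> t + \<epsilon>}"
    have eq: "\<psi> Y = \<psi> (Y \<inter> ?S \<epsilon>)" if "\<epsilon> > 0" for \<epsilon>
    proof -
      let ?L = "Y \<inter> {x. x$i \<le> t - \<epsilon>}" and ?R = "Y \<inter> {x. t - \<epsilon> \<le> x$i}"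
      have RC: "?R \<in> Cn" by (rule Cn_Int[OF Y closed_comp_ge cclosed_ge])
      have LC: "?L \<in> Cn" by (rule Cn_Int[OF Y closed_comp_le cclosed_le])
      have R2C: "?R \<inter> {x. t + \<epsilon> \<le> x$i} \<in> Cn" by (rule Cn_Int[OF RC closed_comp_ge cclosed_ge])
      have 1: "\<psi> Y = \<psi> ?L + \<psi> ?R" by (rule psi_cut[OF val sim Y])
      have 2: "\<psi> ?R = \<psi> (?R \<inter> {x. x$i \<le> t + \<epsilon>}) + \<psi> (?R \<inter> {x. t + \<epsilon> \<le> x$i})"
        by (rule psi_cut[OF val sim RC])
      have "?L \<subseteq> {x::real^'n. \<exists>(i,t)\<in>H. x$i = t}" using sub that p by force
      then have L0: "\<psi> ?L = 0" using insert.IH LC by blast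
      have "?R \<inter> {x. t + \<epsilon> \<le> x$i} \<subseteq> {x::real^'n. \<exists>(i,t)\<in>H. x$i = t}" using sub that p by force
      then have R0: "\<psi> (?R \<inter> {x. t + \<epsilon> \<le> x$i}) = 0" using insert.IH R2C by blast
      have "?R \<inter> {x. x$i \<le> t + \<epsilon>} = Y \<inter> ?S \<epsilon>" by auto
      then show ?thesis using 1 2 L0 R0 by simp
    qed
    have "\<bar>\<psi> Y\<bar> < e" if "e > 0" for e
      using slab_small[OF val sim con Y that, of t i] eq by auto
    then show "\<psi> Y = 0" by (metis zero_less_abs_iff less_irrefl)
  qed
qed

definition bx :: "('n \<Rightarrow> real) \<Rightarrow> ('n \<Rightarrow> real) \<Rightarrow> (real^'n) set" where
  "bx lo hi = {x. \<forall>i. lo i \<le> x$i \<and> x$i \<le> hi i}"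

lemma bx_cbox: "bx lo hi = cbox (\<chi> i. lo i) (\<chi> i. hi i)"
  unfolding bx_def cbox_def by (auto simp: Basis_vec_def cart_eq_inner_axis[symmetric] inner_axis')

lemma Cn_Int_bx: "Y \<in> Cn \<Longrightarrow> Y \<inter> bx lo hi \<in> Cn"
  unfolding bx_cbox by (rule Cn_Int) (auto intro: cclosed_cbox)

definition cutadd :: "((real ^ 'n) set \<Rightarrow> real) \<Rightarrow> bool" where
  "cutadd \<phi> \<longleftrightarrow> (\<forall>Y\<in>Cn. \<forall>i s. \<phi> Y = \<phi> (Y \<inter> {x. x$i \<le> s}) + \<phi> (Y \<inter> {x. s \<le> x$i}))"

lemma cut1d:
  assumes cut: "cutadd \<phi>" and W: "W \<in> Cn" and Wlo: "W \<subseteq> {x. lo \<le> x$j}" and d: "0 \<le> \<delta>"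
  shows "\<phi> (W \<inter> {x. x$j \<le> lo + \<delta> * real (Suc N)}) =
         (\<Sum>l<Suc N. \<phi> (W \<inter> {x. lo + \<delta> * real l \<le> x$j \<and> x$j \<le> lo + \<delta> * (real l + 1)}))"
proof (induction N)
  case 0
  have "W \<inter> {x. x$j \<le> lo + \<delta> * real (Suc 0)} = W \<inter> {x. lo + \<delta> * real 0 \<le> x$j \<and> x$j \<le> lo + \<delta> * (real 0 + 1)}"
    using Wlo by auto
  then show ?case by simp
next
  case (Suc N)
  let ?s = "lo + \<delta> * real (Suc N)"
  let ?W' = "W \<inter> {x. x$j \<le> lo + \<delta> * real (Suc (Suc N))}"
  have W'C: "?W' \<in> Cn" by (rule Cn_Int[OF W closed_comp_le cclosed_le])
  have "\<phi> ?W' = \<phi> (?W' \<inter> {x. x$j \<le> ?s}) + \<phi> (?W' \<inter> {x. ?s \<le> x$j})"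
    using cut W'C unfolding cutadd_def by blast
  moreover have "?W' \<inter> {x. x$j \<le> ?s} = W \<inter> {x. x$j \<le> ?s}"
  proof -
    have "\<delta> * real (Suc N) \<le> \<delta> * real (Suc (Suc N))" using d by (intro mult_left_mono) auto
    then show ?thesis by auto
  qed
  moreover have "?W' \<inter> {x. ?s \<le> x$j} = W \<inter> {x. lo + \<delta> * real (Suc N) \<le> x$j \<and> x$j \<le> lo + \<delta> * (real (Suc N) + 1)}"
    by (auto simp: algebra_simps)
  ultimately show ?case using Suc.IH by simp
qed

definition loS where "loS a \<delta> S m i = (if i \<in> S then a$i + \<delta> * real (m i) else a$i)"
definition hiS where "hiS a \<delta> N S m i = (if i \<in> S then a$i + \<delta> * (real (m i) + 1) else a$i + \<delta> * real N)"
definition GS where "GS N S = {m. \<forall>i. (i \<in> S \<longrightarrow> m i < N) \<and> (i \<notin> S \<longrightarrow> m i = (0::nat))}"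

lemma grid_S:
  assumes cut: "cutadd \<phi>" and Y: "Y \<in> Cn" and Ysub: "Y \<subseteq> bx (\<lambda>i. a$i) (\<lambda>i. a$i + \<delta> * real (Suc N'))"
    and d: "0 \<le> \<delta>" and S: "finite S"
  shows "\<phi> Y = (\<Sum>m\<in>GS (Suc N') S. \<phi> (Y \<inter> bx (loS a \<delta> S m) (hiS a \<delta> (Suc N') S m)))"
  using S
proof (induction S rule: finite_induct)
  case empty
  have g: "GS (Suc N') {} = {\<lambda>_. 0}" by (auto simp: GS_def)
  have y: "Y \<inter> bx (loS a \<delta> {} (\<lambda>_. 0)) (hiS a \<delta> (Suc N') {} (\<lambda>_. 0)) = Y"
    using Ysub by (auto simp: bx_def loS_def hiS_def)
  show ?case unfolding g using y by simp
next
  case (insert j S)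
  let ?N = "Suc N'"
  let ?B = "\<lambda>S m. Y \<inter> bx (loS a \<delta> S m) (hiS a \<delta> ?N S m)"
  let ?sl = "\<lambda>l. {x. a$j + \<delta> * real l \<le> x$j \<and> x$j \<le> a$j + \<delta> * (real l + 1)}"
  have step: "\<phi> (?B S m) = (\<Sum>l<?N. \<phi> (?B (insert j S) (m(j:=l))))" if m: "m \<in> GS ?N S" for m
  proof -
    have WC: "?B S m \<in> Cn" by (rule Cn_Int_bx[OF Y])
    have Wlo: "?B S m \<subseteq> {x. a$j \<le> x$j}" using insert.hyps(2) by (auto simp: bx_def loS_def)
    have e1: "?B S m \<inter> {x. x$j \<le> a$j + \<delta> * real ?N} = ?B S m"
      using insert.hyps(2) by (auto simp: bx_def hiS_def)
    have e2: "?B S m \<inter> ?sl l = ?B (insert j S) (m(j:=l))" if l: "l < ?N" for l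
    proof -
      have p1: "\<delta> * real l \<ge> 0" using d by simp
      have p2: "\<delta> * (real l + 1) \<le> \<delta> * real ?N" using l d by (intro mult_left_mono) auto
      have lo: "loS a \<delta> (insert j S) (m(j:=l)) i = (if i = j then a$j + \<delta> * real l else loS a \<delta> S m i)" for i
        by (simp add: loS_def)
      have hi: "hiS a \<delta> ?N (insert j S) (m(j:=l)) i = (if i = j then a$j + \<delta> * (real l + 1) else hiS a \<delta> ?N S m i)" for i
        by (simp add: hiS_def)
      have loj: "loS a \<delta> S m j = a$j" and hij: "hiS a \<delta> ?N S m j = a$j + \<delta> * real ?N"
        using insert.hyps(2) by (simp_all add: loS_def hiS_def)
      show ?thesis
      proof (intro set_eqI iffI)
        fix x assume "x \<in> ?B S m \<inter> ?sl l"
        then have H1: "\<forall>i. loS a \<delta> S m i \<le> x$i \<and> x$i \<le> hiS a \<delta> ?N S m i" and x: "x \<in> Y"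
          and H2: "a$j + \<delta> * real l \<le> x$j" "x$j \<le> a$j + \<delta> * (real l + 1)" by (auto simp: bx_def)
        have "\<forall>i. loS a \<delta> (insert j S) (m(j:=l)) i \<le> x$i \<and> x$i \<le> hiS a \<delta> ?N (insert j S) (m(j:=l)) i"
          unfolding lo hi using H1 H2 by auto
        then show "x \<in> ?B (insert j S) (m(j:=l))" using x by (simp add: bx_def)
      next
        fix x assume "x \<in> ?B (insert j S) (m(j:=l))"
        then have H: "\<forall>i. loS a \<delta> (insert j S) (m(j:=l)) i \<le> x$i \<and> x$i \<le> hiS a \<delta> ?N (insert j S) (m(j:=l)) i"
          and x: "x \<in> Y" by (auto simp: bx_def)
        then have H': "\<forall>i. (if i = j then a$j + \<delta> * real l else loS a \<delta> S m i) \<le> x$i \<and> x$i \<le> (if i = j then a$j + \<delta> * (real l + 1) else hiS a \<delta> ?N S m i)"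
          unfolding lo hi by simp
        have "\<forall>i. loS a \<delta> S m i \<le> x$i \<and> x$i \<le> hiS a \<delta> ?N S m i"
        proof
          fix i show "loS a \<delta> S m i \<le> x$i \<and> x$i \<le> hiS a \<delta> ?N S m i"
          proof (cases "i = j")
            case True
            then show ?thesis using H'[rule_format, of j] loj hij p1 p2 by simp
          next
            case False
            then show ?thesis using H'[rule_format, of i] by simp
          qed
        qed
        moreover have "a$j + \<delta> * real l \<le> x$j" "x$j \<le> a$j + \<delta> * (real l + 1)"
          using H'[rule_format, of j] by simp_all
        ultimately show "x \<in> ?B S m \<inter> ?sl l" using x by (simp add: bx_def)
      qed
    qed
    have "\<phi> (?B S m) = \<phi> (?B S m \<inter> {x. x$j \<le> a$j + \<delta> * real ?N})" by (simp only: e1)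
    also have "\<dots> = (\<Sum>l<?N. \<phi> (?B S m \<inter> ?sl l))" by (rule cut1d[OF cut WC Wlo d])
    also have "\<dots> = (\<Sum>l<?N. \<phi> (?B (insert j S) (m(j:=l))))"
    proof (rule sum.cong)
      fix l assume "l \<in> {..<?N}"
      then show "\<phi> (?B S m \<inter> ?sl l) = \<phi> (?B (insert j S) (m(j:=l)))" using e2 by simp
    qed simp
    finally show ?thesis .
  qed
  have "\<phi> Y = (\<Sum>m\<in>GS ?N S. \<Sum>l<?N. \<phi> (?B (insert j S) (m(j:=l))))"
    using insert.IH step by simp
  also have "\<dots> = (\<Sum>(m,l)\<in>GS ?N S \<times> {..<?N}. \<phi> (?B (insert j S) (m(j:=l))))"
    by (rule sum.cartesian_product)
  also have "\<dots> = (\<Sum>m\<in>GS ?N (insert j S). \<phi> (?B (insert j S) m))"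
  proof (rule sum.reindex_bij_witness[where i="\<lambda>m. (m(j:=0), m j)" and j="\<lambda>(m,l). m(j:=l)"])
    fix p assume "p \<in> GS ?N S \<times> {..<?N}"
    then show "(\<lambda>m. (m(j:=0), m j)) ((\<lambda>(m,l). m(j:=l)) p) = p"
      using insert.hyps(2) by (cases p) (auto simp: GS_def)
    show "(\<lambda>(m,l). m(j:=l)) p \<in> GS ?N (insert j S)"
      using \<open>p \<in> GS ?N S \<times> {..<?N}\<close> by (cases p) (auto simp: GS_def)
    show "\<phi> (?B (insert j S) ((\<lambda>(m,l). m(j:=l)) p)) = (case p of (m,l) \<Rightarrow> \<phi> (?B (insert j S) (m(j:=l))))"
      by (cases p) simp
  next
    fix m assume "m \<in> GS ?N (insert j S)"
    then show "(\<lambda>(m,l). m(j:=l)) ((\<lambda>m. (m(j:=0), m j)) m) = m"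
      and "(\<lambda>m. (m(j:=0), m j)) m \<in> GS ?N S \<times> {..<?N}"
      using insert.hyps(2) by (auto simp: GS_def)
  qed
  finally show ?case .
qed

definition cell where "cell a \<delta> m = bx (\<lambda>i. a$i + \<delta> * real (m i)) (\<lambda>i. a$i + \<delta> * (real (m i) + 1))"

lemma grid:
  assumes cut: "cutadd \<phi>" and Y: "Y \<in> Cn" and Ysub: "Y \<subseteq> bx (\<lambda>i. a$i) (\<lambda>i. a$i + \<delta> * real N)"
    and d: "0 \<le> \<delta>" and N: "N \<ge> 1"
  shows "\<phi> Y = (\<Sum>m\<in>{m. \<forall>i. m i < N}. \<phi> (Y \<inter> cell a \<delta> m))"
proof -
  obtain N' where N': "N = Suc N'" using N by (cases N) auto
  have g: "GS N UNIV = {m. \<forall>i. m i < N}" by (auto simp: GS_def)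
  have c: "bx (loS a \<delta> UNIV m) (hiS a \<delta> N UNIV m) = cell a \<delta> m" for m
    by (simp add: loS_def[abs_def] hiS_def[abs_def] cell_def)
  have "\<phi> Y = (\<Sum>m\<in>GS N UNIV. \<phi> (Y \<inter> bx (loS a \<delta> UNIV m) (hiS a \<delta> N UNIV m)))"
    using grid_S[OF cut Y Ysub[unfolded N'] d, of UNIV] N' by simp
  then show ?thesis by (simp only: c g)
qed

lemma cutadd_psi: "valuation \<psi> \<Longrightarrow> simple_valuation \<psi> \<Longrightarrow> cutadd \<psi>"
  unfolding cutadd_def using psi_cut by blast

lemma cutadd_vol: "cutadd (\<lambda>X. measure lebesgue (X::(real^'n) set))"
  unfolding cutadd_def Cn_def using vol_cut by blast

definition R1 :: "real \<Rightarrow> real \<Rightarrow> bool" where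
  "R1 s u \<longleftrightarrow> (\<exists>m::int. of_int m \<le> s \<and> s \<le> of_int m + 1 \<and> of_int m \<le> u \<and> u \<le> of_int m + 1)"

definition Rd :: "real \<Rightarrow> real \<Rightarrow> real \<Rightarrow> bool" where
  "Rd \<delta> s u \<longleftrightarrow> R1 (s / \<delta>) (u / \<delta>)"

lemma R1_refl: "R1 s s"
  unfolding R1_def by (intro exI[of _ "\<lfloor>s\<rfloor>"]) linarith

lemma R1_hull:
  assumes "R1 a b" "a \<le> c \<or> b \<le> c" "c \<le> a \<or> c \<le> b" "a \<le> d \<or> b \<le> d" "d \<le> a \<or> d \<le> b"
  shows "R1 c d"
proof -
  obtain m :: int where "of_int m \<le> a" "a \<le> of_int m + 1" "of_int m \<le> b" "b \<le> of_int m + 1"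
    using assms(1) unfolding R1_def by blast
  then show ?thesis unfolding R1_def using assms(2-5) by (intro exI[of _ m]) linarith
qed

lemma R1_neg: "R1 s u \<Longrightarrow> R1 (-s) (-u)"
  unfolding R1_def by (elim exE, rule_tac x="- m - 1" in exI) auto

lemma R1_opp:
  assumes "R1 x z" "R1 x' z'" "x' \<le> x" "z \<le> z'" "x' \<le> w" "w \<le> x" "z \<le> v" "v \<le> z'"
  shows "R1 w v"
proof -
  obtain m :: int where m: "of_int m \<le> x" "x \<le> of_int m + 1" "of_int m \<le> z" "z \<le> of_int m + 1"
    using assms(1) unfolding R1_def by blast
  obtain m' :: int where m': "of_int m' \<le> x'" "x' \<le> of_int m' + 1" "of_int m' \<le> z'" "z' \<le> of_int m' + 1"
    using assms(2) unfolding R1_def by blast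
  have "real_of_int m \<le> real_of_int (m' + 1)" using m m' assms by simp
  then have a: "m \<le> m' + 1" by (simp only: of_int_le_iff)
  have "real_of_int m' \<le> real_of_int (m + 1)" using m m' assms by simp
  then have b: "m' \<le> m + 1" by (simp only: of_int_le_iff)
  consider "m = m'" | "m = m' + 1" | "m' = m + 1" using a b by linarith
  then show ?thesis
  proof cases
    case 1 then have e: "real_of_int m = real_of_int m'" by simp
    show ?thesis unfolding R1_def using m m' assms e by (intro exI[of _ m] conjI; linarith)
  next
    case 2
    then have e: "real_of_int m = real_of_int m' + 1" by simp
    show ?thesis
    proof (cases "w \<le> of_int m")
      case True then show ?thesis unfolding R1_def using m m' assms e by (intro exI[of _ m'] conjI; linarith)
    next
      case False then show ?thesis unfolding R1_def using m m' assms e by (intro exI[of _ m] conjI; linarith)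
    qed
  next
    case 3
    then have e: "real_of_int m' = real_of_int m + 1" by simp
    show ?thesis
    proof (cases "v \<le> of_int m + 1")
      case True then show ?thesis unfolding R1_def using m m' assms e by (intro exI[of _ m] conjI; linarith)
    next
      case False then show ?thesis unfolding R1_def using m m' assms e by (intro exI[of _ m'] conjI; linarith)
    qed
  qed
qed

lemma div_le: "0 < (\<delta>::real) \<Longrightarrow> a \<le> b \<Longrightarrow> a / \<delta> \<le> b / \<delta>"
  by (simp add: divide_right_mono)

lemma disj_div: "0 < (\<delta>::real) \<Longrightarrow> a \<le> c \<or> b \<le> c \<Longrightarrow> a / \<delta> \<le> c / \<delta> \<or> b / \<delta> \<le> c / \<delta>"
  using div_le[of \<delta> a c] div_le[of \<delta> b c] by auto

lemma disj_div2: "0 < (\<delta>::real) \<Longrightarrow> c \<le> a \<or> c \<le> b \<Longrightarrow> c / \<delta> \<le> a / \<delta> \<or> c / \<delta> \<le> b / \<delta>"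
  using div_le[of \<delta> c a] div_le[of \<delta> c b] by auto

lemma Rd_refl: "Rd \<delta> s s" unfolding Rd_def by (rule R1_refl)

lemma Rd_neg: "Rd \<delta> s u \<Longrightarrow> Rd \<delta> (-s) (-u)"
  unfolding Rd_def using R1_neg[of "s/\<delta>" "u/\<delta>"] by simp

lemma Rd_hull:
  assumes "0 < \<delta>" "Rd \<delta> a b" "a \<le> c \<or> b \<le> c" "c \<le> a \<or> c \<le> b" "a \<le> d \<or> b \<le> d" "d \<le> a \<or> d \<le> b"
  shows "Rd \<delta> c d"
  using assms(2) disj_div[OF assms(1) assms(3)] disj_div2[OF assms(1) assms(4)]
    disj_div[OF assms(1) assms(5)] disj_div2[OF assms(1) assms(6)]
  unfolding Rd_def by (rule R1_hull)

lemma Rd_opp: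
  assumes "0 < \<delta>" "Rd \<delta> x z" "Rd \<delta> x' z'" "x' \<le> x" "z \<le> z'" "x' \<le> w" "w \<le> x" "z \<le> v" "v \<le> z'"
  shows "Rd \<delta> w v"
  using assms(2,3) div_le[OF assms(1) assms(4)] div_le[OF assms(1) assms(5)] div_le[OF assms(1) assms(6)]
    div_le[OF assms(1) assms(7)] div_le[OF assms(1) assms(8)] div_le[OF assms(1) assms(9)]
  unfolding Rd_def by (rule R1_opp)

lemma Rd_clamp:
  assumes d: "0 < \<delta>" and R: "Rd \<delta> x z" "Rd \<delta> x' z'" and w: "x \<le> w" "w \<le> x'" and z: "z \<le> z'"
  shows "Rd \<delta> w (max z (min z' w))"
proof (cases "w \<le> z")
  case True
  then have "max z (min z' w) = z" using z by simp
  then show ?thesis using Rd_hull[OF d R(1), of w z] True w by simp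
next
  case False
  show ?thesis
  proof (cases "z' \<le> w")
    case True
    then have "max z (min z' w) = z'" using z by simp
    then show ?thesis using Rd_hull[OF d R(2), of w z'] True w by simp
  next
    case False
    then have "max z (min z' w) = w" using \<open>\<not> w \<le> z\<close> by simp
    then show ?thesis by (simp add: Rd_refl)
  qed
qed

definition sig :: "real \<Rightarrow> real" where "sig t = max 0 (min 1 (3 * t - 1))"

lemma sig_range: "0 \<le> sig t" "sig t \<le> 1" unfolding sig_def by auto
lemma sig_mono: "t \<le> t' \<Longrightarrow> sig t \<le> sig t'" unfolding sig_def by auto
lemma sig_cont: "continuous_on S sig" unfolding sig_def by (intro continuous_intros)

lemma cont_p_sig:
  assumes "continuous_on {0..1} p"
  shows "continuous_on {0..1} (\<lambda>t. p (sig t))"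
  by (rule continuous_on_compose2[OF assms sig_cont]) (auto simp: sig_range)

lemma path1d_same:
  assumes d: "0 < \<delta>" and cp: "continuous_on {0..1} p" and p0: "p 0 = x" and p1: "p 1 = x'"
    and mono: "\<And>t t'. 0 \<le> t \<Longrightarrow> t \<le> t' \<Longrightarrow> t' \<le> 1 \<Longrightarrow> x \<le> p t \<and> p t \<le> p t' \<and> p t' \<le> x'"
    and R: "Rd \<delta> x z" "Rd \<delta> x' z'" and z: "z \<le> z'"
  shows "\<exists>q. continuous_on {0..1} q \<and> q 0 = z \<and> q 1 = z' \<and> (\<forall>t\<in>{0..1}. Rd \<delta> (p (sig t)) (q t)) \<and>
     (\<forall>t t'. 0 \<le> t \<longrightarrow> t \<le> t' \<longrightarrow> t' \<le> 1 \<longrightarrow> z \<le> q t \<and> q t \<le> q t' \<and> q t' \<le> z')"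
proof -
  define D where "D = z' - z"
  have D0: "0 \<le> D" using z by (simp add: D_def)
  define c where "c = (\<lambda>t. max z (min z' (p (sig t))))"
  define q where "q = (\<lambda>t. max (min (c t) (z + 3 * (t * D))) (z' - 3 * ((1 - t) * D)))"
  have cq: "continuous_on {0..1} q" unfolding q_def c_def
    by (intro continuous_intros cont_p_sig cp)
  have w: "x \<le> p (sig t) \<and> p (sig t) \<le> x'" for t using mono[of "sig t" "sig t"] sig_range[of t] by auto
  have c_rng: "z \<le> c t \<and> c t \<le> z'" for t using z by (auto simp: c_def)
  have sig0: "sig 0 = 0" and sig1: "sig 1 = 1" by (auto simp: sig_def)
  have q0: "q 0 = z" using c_rng[of 0] D0 by (simp add: q_def D_def)
  have q1: "q 1 = z'" using c_rng[of 1] D0 by (simp add: q_def D_def)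
  have qmono: "z \<le> q t \<and> q t \<le> q t' \<and> q t' \<le> z'" if t: "0 \<le> t" "t \<le> t'" "t' \<le> 1" for t t'
  proof -
    have "p (sig t) \<le> p (sig t')" using mono[of "sig t" "sig t'"] sig_mono[OF t(2)] sig_range by auto
    then have cc: "c t \<le> c t'" by (auto simp: c_def)
    have m1: "t * D \<le> t' * D" using t D0 by (intro mult_right_mono) auto
    have m2: "(1 - t') * D \<le> (1 - t) * D" using t D0 by (intro mult_right_mono) auto
    have m3: "0 \<le> t * D" "0 \<le> (1 - t') * D" using t D0 by auto
    show ?thesis unfolding q_def using cc m1 m2 m3 c_rng[of t] c_rng[of t'] by (simp add: D_def; (linarith)?)
  qed
  have qR: "Rd \<delta> (p (sig t)) (q t)" if t: "0 \<le> t" "t \<le> 1" for t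
  proof -
    consider "t \<le> 1/3" | "2/3 \<le> t" | "1/3 < t" "t < 2/3" by linarith
    then show ?thesis
    proof cases
      case 1
      then have s: "sig t = 0" by (simp add: sig_def)
      have "2 * D \<le> (3 * (1 - t)) * D" by (rule mult_right_mono) (use 1 D0 in auto)
      then have "2 * D \<le> 3 * ((1 - t) * D)" by (simp add: algebra_simps)
      moreover have "0 \<le> t * D" using t D0 by simp
      ultimately have "z \<le> q t \<and> q t \<le> c t" unfolding q_def using c_rng[of t] by (simp add: D_def; (linarith)?)
      moreover have "c t = max z (min z' x)" using s p0 by (simp add: c_def)
      ultimately have "z \<le> q t" "q t \<le> z \<or> q t \<le> x" by auto
      then show ?thesis using Rd_hull[OF d R(1), of x "q t"] s p0 by auto
    next
      case 2
      then have s: "sig t = 1" by (simp add: sig_def)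
      have "2 * D \<le> (3 * t) * D" by (rule mult_right_mono) (use 2 D0 in auto)
      then have "2 * D \<le> 3 * (t * D)" by (simp add: algebra_simps)
      moreover have "0 \<le> (1 - t) * D" using t D0 by simp
      ultimately have "c t \<le> q t \<and> q t \<le> z'" unfolding q_def using c_rng[of t] by (simp add: D_def; (linarith)?)
      moreover have "c t = max z (min z' x')" using s p1 by (simp add: c_def)
      ultimately have "q t \<le> z'" "z' \<le> q t \<or> x' \<le> q t" by auto
      then show ?thesis using Rd_hull[OF d R(2), of x' "q t"] s p1 by auto
    next
      case 3
      have "1 * D \<le> (3 * t) * D" by (rule mult_right_mono) (use 3 D0 in auto)
      then have "D \<le> 3 * (t * D)" by (simp add: algebra_simps)
      moreover have "1 * D \<le> (3 * (1 - t)) * D" by (rule mult_right_mono) (use 3 D0 in auto)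
      then have "D \<le> 3 * ((1 - t) * D)" by (simp add: algebra_simps)
      ultimately have "q t = c t" unfolding q_def using c_rng[of t] by (simp add: D_def; (linarith)?)
      then show ?thesis using Rd_clamp[OF d R w[THEN conjunct1] w[THEN conjunct2] z] by (simp add: c_def)
    qed
  qed
  show ?thesis using cq q0 q1 qR qmono by (intro exI[of _ q]) auto
qed

lemma path1d_opp:
  assumes d: "0 < \<delta>" and p0: "p 0 = x" and p1: "p 1 = x'"
    and mono: "\<And>t t'. 0 \<le> t \<Longrightarrow> t \<le> t' \<Longrightarrow> t' \<le> 1 \<Longrightarrow> x' \<le> p t' \<and> p t' \<le> p t \<and> p t \<le> x"
    and R: "Rd \<delta> x z" "Rd \<delta> x' z'" and z: "z \<le> z'"
  shows "\<exists>q. continuous_on {0..1} q \<and> q 0 = z \<and> q 1 = z' \<and> (\<forall>t\<in>{0..1}. Rd \<delta> (p (sig t)) (q t)) \<and>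
     (\<forall>t t'. 0 \<le> t \<longrightarrow> t \<le> t' \<longrightarrow> t' \<le> 1 \<longrightarrow> z \<le> q t \<and> q t \<le> q t' \<and> q t' \<le> z')"
proof -
  define D where "D = z' - z"
  have D0: "0 \<le> D" using z by (simp add: D_def)
  define q where "q = (\<lambda>t. z + t * D)"
  have cq: "continuous_on {0..1} q" unfolding q_def by (intro continuous_intros)
  have xx: "x' \<le> x" using mono[of 0 1] by auto
  have w: "x' \<le> p (sig t) \<and> p (sig t) \<le> x" for t using mono[of "sig t" "sig t"] sig_range[of t] by auto
  have qmono: "z \<le> q t \<and> q t \<le> q t' \<and> q t' \<le> z'" if t: "0 \<le> t" "t \<le> t'" "t' \<le> 1" for t t'
  proof -
    have "t * D \<le> t' * D" using t D0 by (intro mult_right_mono) auto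
    moreover have "t' * D \<le> D" using t D0 by (simp add: mult_left_le_one_le)
    moreover have "0 \<le> t * D" using t D0 by simp
    ultimately show ?thesis by (simp add: q_def D_def)
  qed
  have qR: "Rd \<delta> (p (sig t)) (q t)" if t: "0 \<le> t" "t \<le> 1" for t
    using Rd_opp[OF d R xx z, of "p (sig t)" "q t"] w[of t] qmono[of t t] t by auto
  show ?thesis using cq qR qmono by (intro exI[of _ q]) (auto simp: q_def D_def)
qed

lemma btw_order:
  assumes "btw a b c d"
  shows "(a \<le> d \<longrightarrow> a \<le> b \<and> b \<le> c \<and> c \<le> d) \<and> (d \<le> a \<longrightarrow> d \<le> c \<and> c \<le> b \<and> b \<le> a)"
  using assms unfolding btw_def by (auto simp: abs_if split: if_splits)

lemma btw_of_order: "a \<le> b \<and> b \<le> c \<and> c \<le> d \<Longrightarrow> btw a b c d"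
  unfolding btw_def by auto

lemma path1d_le:
  assumes d: "0 < \<delta>" and cp: "continuous_on {0..1} p" and p0: "p 0 = x" and p1: "p 1 = x'"
    and bt: "\<And>t t'. 0 \<le> t \<Longrightarrow> t \<le> t' \<Longrightarrow> t' \<le> 1 \<Longrightarrow> btw x (p t) (p t') x'"
    and R: "Rd \<delta> x z" "Rd \<delta> x' z'" and z: "z \<le> z'"
  shows "\<exists>q. continuous_on {0..1} q \<and> q 0 = z \<and> q 1 = z' \<and> (\<forall>t\<in>{0..1}. Rd \<delta> (p (sig t)) (q t)) \<and>
     (\<forall>t t'. 0 \<le> t \<longrightarrow> t \<le> t' \<longrightarrow> t' \<le> 1 \<longrightarrow> btw z (q t) (q t') z')"
proof (cases "x \<le> x'")
  case True
  have mo: "x \<le> p t \<and> p t \<le> p t' \<and> p t' \<le> x'" if "0 \<le> t" "t \<le> t'" "t' \<le> 1" for t t'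
    using btw_order[OF bt[OF that]] True by auto
  obtain q where "continuous_on {0..1} q" "q 0 = z" "q 1 = z'" "\<forall>t\<in>{0..1}. Rd \<delta> (p (sig t)) (q t)"
     "\<forall>t t'. 0 \<le> t \<longrightarrow> t \<le> t' \<longrightarrow> t' \<le> 1 \<longrightarrow> z \<le> q t \<and> q t \<le> q t' \<and> q t' \<le> z'"
    using path1d_same[OF d cp p0 p1 mo R z] by blast
  then show ?thesis using btw_of_order by (intro exI[of _ q]) auto
next
  case False
  have mo: "x' \<le> p t' \<and> p t' \<le> p t \<and> p t \<le> x" if "0 \<le> t" "t \<le> t'" "t' \<le> 1" for t t'
    using btw_order[OF bt[OF that]] False by auto
  obtain q where "continuous_on {0..1} q" "q 0 = z" "q 1 = z'" "\<forall>t\<in>{0..1}. Rd \<delta> (p (sig t)) (q t)"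
     "\<forall>t t'. 0 \<le> t \<longrightarrow> t \<le> t' \<longrightarrow> t' \<le> 1 \<longrightarrow> z \<le> q t \<and> q t \<le> q t' \<and> q t' \<le> z'"
    using path1d_opp[OF d p0 p1 mo R z] by blast
  then show ?thesis using btw_of_order by (intro exI[of _ q]) auto
qed

lemma btw_neg: "btw (-a) (-b) (-c) (-d) = btw a b c d"
  unfolding btw_def by (simp add: abs_minus_commute)

lemma path1d:
  assumes d: "0 < \<delta>" and cp: "continuous_on {0..1} p" and p0: "p 0 = x" and p1: "p 1 = x'"
    and bt: "\<And>t t'. 0 \<le> t \<Longrightarrow> t \<le> t' \<Longrightarrow> t' \<le> 1 \<Longrightarrow> btw x (p t) (p t') x'"
    and R: "Rd \<delta> x z" "Rd \<delta> x' z'"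
  shows "\<exists>q. continuous_on {0..1} q \<and> q 0 = z \<and> q 1 = z' \<and> (\<forall>t\<in>{0..1}. Rd \<delta> (p (sig t)) (q t)) \<and>
     (\<forall>t t'. 0 \<le> t \<longrightarrow> t \<le> t' \<longrightarrow> t' \<le> 1 \<longrightarrow> btw z (q t) (q t') z')"
proof (cases "z \<le> z'")
  case True
  then show ?thesis using path1d_le[OF assms] by blast
next
  case False
  have cp': "continuous_on {0..1} (\<lambda>t. - p t)" by (intro continuous_intros cp)
  have bt': "btw (-x) (- p t) (- p t') (-x')" if "0 \<le> t" "t \<le> t'" "t' \<le> 1" for t t'
    using bt[OF that] by (simp add: btw_neg)
  obtain q where q: "continuous_on {0..1} q" "q 0 = -z" "q 1 = -z'" "\<forall>t\<in>{0..1}. Rd \<delta> (- p (sig t)) (q t)"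
     "\<forall>t t'. 0 \<le> t \<longrightarrow> t \<le> t' \<longrightarrow> t' \<le> 1 \<longrightarrow> btw (-z) (q t) (q t') (-z')"
    using path1d_le[OF d cp', of "-x" "-x'" "-z" "-z'"] p0 p1 bt' Rd_neg[OF R(1)] Rd_neg[OF R(2)] False
    by auto
  show ?thesis
  proof (intro exI[of _ "\<lambda>t. - q t"] conjI)
    show "continuous_on {0..1} (\<lambda>t. - q t)" by (intro continuous_intros q(1))
    show "- q 0 = z" "- q 1 = z'" using q by auto
    show "\<forall>t\<in>{0..1}. Rd \<delta> (p (sig t)) (- q t)" using q(4) Rd_neg by fastforce
    show "\<forall>t t'. 0 \<le> t \<longrightarrow> t \<le> t' \<longrightarrow> t' \<le> 1 \<longrightarrow> btw z (- q t) (- q t') z'"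
      using q(5) btw_neg by (metis minus_minus)
  qed
qed

definition Pk :: "real \<Rightarrow> (real^'n) set \<Rightarrow> (real^'n) set" where
  "Pk \<delta> X = {y. \<exists>x\<in>X. \<forall>i. Rd \<delta> (x$i) (y$i)}"

lemma Pk_convex:
  assumes d: "0 < \<delta>" and X: "l1_convex X"
  shows "l1_convex (Pk \<delta> X)"
proof (rule l1_convexI)
  fix z z' assume "z \<in> Pk \<delta> X" "z' \<in> Pk \<delta> X"
  then obtain x x' where x: "x \<in> X" "\<forall>i. Rd \<delta> (x$i) (z$i)" and x': "x' \<in> X" "\<forall>i. Rd \<delta> (x'$i) (z'$i)"
    unfolding Pk_def by blast
  obtain p where p: "mpath X p x x'" using l1_convexD[OF X x(1) x'(1)] by blast
  have cp: "continuous_on {0..1} p" and p0: "p 0 = x" and p1: "p 1 = x'" and pX: "p ` {0..1} \<subseteq> X"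
    and pb: "\<And>t t'. 0 \<le> t \<Longrightarrow> t \<le> t' \<Longrightarrow> t' \<le> 1 \<Longrightarrow>
        l1_dist x (p t) + l1_dist (p t) (p t') + l1_dist (p t') x' = l1_dist x x'"
    using p unfolding mpath_def by auto
  have "\<forall>i. \<exists>q. continuous_on {0..1} q \<and> q 0 = z$i \<and> q 1 = z'$i \<and> (\<forall>t\<in>{0..1}. Rd \<delta> (p (sig t) $ i) (q t)) \<and>
     (\<forall>t t'. 0 \<le> t \<longrightarrow> t \<le> t' \<longrightarrow> t' \<le> 1 \<longrightarrow> btw (z$i) (q t) (q t') (z'$i))"
  proof
    fix i
    have cpi: "continuous_on {0..1} (\<lambda>t. p t $ i)" by (intro continuous_intros cp)
    have bi: "btw (x$i) (p t $ i) (p t' $ i) (x'$i)" if "0 \<le> t" "t \<le> t'" "t' \<le> 1" for t t'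
      using pb[OF that] btw_l1 by blast
    show "\<exists>q. continuous_on {0..1} q \<and> q 0 = z$i \<and> q 1 = z'$i \<and> (\<forall>t\<in>{0..1}. Rd \<delta> (p (sig t) $ i) (q t)) \<and>
     (\<forall>t t'. 0 \<le> t \<longrightarrow> t \<le> t' \<longrightarrow> t' \<le> 1 \<longrightarrow> btw (z$i) (q t) (q t') (z'$i))"
      using path1d[OF d cpi, of "x$i" "x'$i" "z$i" "z'$i"] p0 p1 bi x(2) x'(2) by auto
  qed
  then obtain Q where Q: "\<And>i. continuous_on {0..1} (Q i)" "\<And>i. Q i 0 = z$i" "\<And>i. Q i 1 = z'$i"
    "\<And>i t. t \<in> {0..1} \<Longrightarrow> Rd \<delta> (p (sig t) $ i) (Q i t)"
    "\<And>i t t'. 0 \<le> t \<Longrightarrow> t \<le> t' \<Longrightarrow> t' \<le> 1 \<Longrightarrow> btw (z$i) (Q i t) (Q i t') (z'$i)"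
    unfolding choice_iff by blast
  define q where "q = (\<lambda>t. \<chi> i. Q i t)"
  have "mpath (Pk \<delta> X) q z z'"
    unfolding mpath_def
  proof (intro conjI allI impI)
    show "continuous_on {0..1} q" unfolding q_def by (intro continuous_intros Q(1))
    show "q 0 = z" "q 1 = z'" using Q(2,3) by (auto simp: q_def vec_eq_iff)
    show "q ` {0..1} \<subseteq> Pk \<delta> X"
    proof
      fix y assume "y \<in> q ` {0..1}"
      then obtain t where t: "t \<in> {0..1}" "y = q t" by blast
      have "p (sig t) \<in> X" using pX sig_range[of t] by auto
      moreover have "\<forall>i. Rd \<delta> (p (sig t) $ i) (y $ i)" using Q(4)[OF t(1)] t(2) by (simp add: q_def)
      ultimately show "y \<in> Pk \<delta> X" unfolding Pk_def by blast
    qed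
    fix t t' :: real assume "0 \<le> t" "t \<le> t'" "t' \<le> 1"
    then show "l1_dist z (q t) + l1_dist (q t) (q t') + l1_dist (q t') z' = l1_dist z z'"
      using Q(5) by (intro btw_l1[THEN iffD2]) (simp add: q_def)
  qed
  then show "\<exists>q. mpath (Pk \<delta> X) q z z'" by blast
qed

lemma R1_alt: "R1 s u \<longleftrightarrow> (\<forall>m::int. of_int m \<le> min s u \<or> max s u \<le> of_int m)"
proof
  assume "R1 s u"
  then obtain k :: int where k: "of_int k \<le> s" "s \<le> of_int k + 1" "of_int k \<le> u" "u \<le> of_int k + 1"
    unfolding R1_def by blast
  show "\<forall>m::int. of_int m \<le> min s u \<or> max s u \<le> of_int m"
  proof
    fix m :: int
    have "m \<le> k \<or> k + 1 \<le> m" by linarith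
    then have "real_of_int m \<le> real_of_int k \<or> real_of_int (k + 1) \<le> real_of_int m"
      by (simp only: of_int_le_iff)
    then have dj: "real_of_int m \<le> of_int k \<or> of_int k + 1 \<le> real_of_int m" by simp
    then show "of_int m \<le> min s u \<or> max s u \<le> of_int m"
    proof
      assume "real_of_int m \<le> of_int k" then show ?thesis using k by simp
    next
      assume "of_int k + 1 \<le> real_of_int m" then show ?thesis using k by simp
    qed
  qed
next
  assume H: "\<forall>m::int. of_int m \<le> min s u \<or> max s u \<le> of_int m"
  define k where "k = \<lfloor>min s u\<rfloor>"
  have k1: "of_int k \<le> min s u" "min s u < of_int k + 1" unfolding k_def by linarith+
  have "max s u \<le> of_int (k + 1)" using H[rule_format, of "k+1"] k1 by auto
  then show "R1 s u" unfolding R1_def using k1 by (intro exI[of _ k]) auto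
qed

lemma closed_R:
  assumes "0 < \<delta>" shows "closed {p::(real^'n) \<times> (real^'n). \<forall>i. Rd \<delta> (fst p $ i) (snd p $ i)}"
  unfolding Rd_def R1_alt
  by (intro closed_Collect_all closed_Collect_disj closed_Collect_le continuous_intros) (use assms in auto)

lemma Rd_dist: assumes "0 < \<delta>" "Rd \<delta> s u" shows "\<bar>s - u\<bar> \<le> \<delta>"
proof -
  obtain m :: int where "of_int m \<le> s/\<delta>" "s/\<delta> \<le> of_int m + 1" "of_int m \<le> u/\<delta>" "u/\<delta> \<le> of_int m + 1"
    using assms(2) unfolding Rd_def R1_def by blast
  then have "s/\<delta> - u/\<delta> \<le> 1" "u/\<delta> - s/\<delta> \<le> 1" by linarith+
  then have "(s - u)/\<delta> \<le> 1" "(u - s)/\<delta> \<le> 1" by (simp_all add: diff_divide_distrib)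
  then have "s - u \<le> \<delta>" "u - s \<le> \<delta>" using assms(1) by (simp_all add: pos_divide_le_eq)
  then show ?thesis by (simp add: abs_le_iff)
qed

lemma Pk_dist:
  assumes d: "0 < \<delta>" and "\<forall>i. Rd \<delta> (x$i) (y$i)"
  shows "dist y (x::real^'n) \<le> real CARD('n) * \<delta>"
proof -
  have "dist y x \<le> l1_dist y x" by (rule dist_le_l1)
  also have "\<dots> \<le> (\<Sum>i\<in>(UNIV::'n set). \<delta>)" unfolding l1_dist_def
  proof (rule sum_mono)
    fix i
    have "\<bar>x$i - y$i\<bar> \<le> \<delta>" using Rd_dist[OF d] assms(2) by blast
    then show "\<bar>y$i - x$i\<bar> \<le> \<delta>" by (simp only: abs_minus_commute)
  qed
  finally show ?thesis by simp
qed

lemma subset_Pk: "0 < \<delta> \<Longrightarrow> X \<subseteq> Pk \<delta> X"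
  unfolding Pk_def using Rd_refl by blast

lemma Pk_compact:
  assumes d: "0 < \<delta>" and X: "compact (X::(real^'n) set)"
  shows "compact (Pk \<delta> X)"
proof -
  define K where "K = (X \<times> UNIV) \<inter> {p::(real^'n) \<times> (real^'n). \<forall>i. Rd \<delta> (fst p $ i) (snd p $ i)}"
  have cK: "closed K" unfolding K_def
    by (rule closed_Int[OF closed_Times[OF compact_imp_closed[OF X] closed_UNIV] closed_R[OF d]])
  obtain B where B: "\<forall>x\<in>X. norm x \<le> B" using compact_imp_bounded[OF X] unfolding bounded_iff by blast
  have "K \<subseteq> X \<times> cball 0 (B + real CARD('n) * \<delta>)"
  proof
    fix p assume "p \<in> K"
    then obtain x y where p: "p = (x,y)" "x \<in> X" "\<forall>i. Rd \<delta> (x$i) (y$i)" unfolding K_def by auto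
    have "dist y x \<le> real CARD('n) * \<delta>" by (rule Pk_dist[OF d p(3)])
    moreover have "norm y \<le> norm x + norm (y - x)" using norm_triangle_ineq[of x "y-x"] by simp
    moreover have "norm x \<le> B" using B p(2) by blast
    ultimately have "norm y \<le> B + real CARD('n) * \<delta>" by (simp add: dist_norm)
    then show "p \<in> X \<times> cball 0 (B + real CARD('n) * \<delta>)" using p by auto
  qed
  then have "bounded K" by (rule bounded_subset[OF bounded_Times[OF compact_imp_bounded[OF X] bounded_cball]])
  then have "compact K" using cK by (simp add: compact_eq_bounded_closed)
  then have "compact (snd ` K)" by (intro compact_continuous_image continuous_intros)
  moreover have "snd ` K = Pk \<delta> X"
  proof
    show "snd ` K \<subseteq> Pk \<delta> X" unfolding K_def Pk_def by auto
    show "Pk \<delta> X \<subseteq> snd ` K"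
    proof
      fix y assume "y \<in> Pk \<delta> X"
      then obtain x where "x \<in> X" "\<forall>i. Rd \<delta> (x$i) (y$i)" unfolding Pk_def by blast
      then have "(x,y) \<in> K" unfolding K_def by simp
      then show "y \<in> snd ` K" by (metis image_eqI snd_conv)
    qed
  qed
  ultimately show ?thesis by simp
qed

lemma Pk_Cn: "0 < \<delta> \<Longrightarrow> X \<in> Cn \<Longrightarrow> Pk \<delta> X \<in> Cn"
  unfolding Cn_def using Pk_compact Pk_convex by blast

lemma Pk_hausdorff:
  assumes d: "0 < \<delta>" and "(X::(real^'n) set) \<noteq> {}"
  shows "hausdorff_dist X (Pk \<delta> X) \<le> real CARD('n) * \<delta>"
proof (rule hausdorff_le[OF assms(2) subset_Pk[OF d]])
  show "\<forall>y\<in>Pk \<delta> X. infdist y X \<le> real CARD('n) * \<delta>"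
  proof
    fix y assume "y \<in> Pk \<delta> X"
    then obtain x where x: "x \<in> X" "\<forall>i. Rd \<delta> (x$i) (y$i)" unfolding Pk_def by blast
    show "infdist y X \<le> real CARD('n) * \<delta>"
      using infdist_le[OF x(1), of y] Pk_dist[OF d x(2)] by linarith
  qed
  show "0 \<le> real CARD('n) * \<delta>" using d by simp
qed

lemma R1_half: assumes "R1 (2*a) (2*b)" shows "R1 a b"
proof -
  obtain m :: int where m: "of_int m \<le> 2*a" "2*a \<le> of_int m + 1" "of_int m \<le> 2*b" "2*b \<le> of_int m + 1"
    using assms unfolding R1_def by blast
  define k where "k = m div 2"
  define r where "r = m mod 2"
  have mr: "m = 2*k + r" unfolding k_def r_def by simp
  have r: "0 \<le> r" "r \<le> 1" unfolding r_def by auto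
  have e: "real_of_int m = 2 * of_int k + of_int r" using mr by simp
  have r': "0 \<le> real_of_int r" "real_of_int r \<le> 1" using r by simp_all
  show ?thesis unfolding R1_def using m e r' by (intro exI[of _ k] conjI; linarith)
qed

lemma Rd_half: assumes "0 < \<delta>" "Rd (\<delta>/2) s u" shows "Rd \<delta> s u"
proof -
  have "s / (\<delta>/2) = 2 * (s/\<delta>)" "u / (\<delta>/2) = 2 * (u/\<delta>)" by simp_all
  then show ?thesis using assms(2) R1_half unfolding Rd_def by metis
qed

definition dk :: "nat \<Rightarrow> real" where "dk k = 1 / 2^k"

lemma dk_pos: "0 < dk k" unfolding dk_def by simp

lemma Pk_decseq: "decseq (\<lambda>k. Pk (dk k) X)"
proof (rule decseq_SucI)
  fix k
  have e: "dk (Suc k) = dk k / 2" unfolding dk_def by simp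
  show "Pk (dk (Suc k)) X \<subseteq> Pk (dk k) X"
    unfolding Pk_def e using Rd_half[OF dk_pos] by blast
qed

lemma dk_small: "0 < e \<Longrightarrow> \<exists>K. \<forall>k\<ge>K. C * dk k < e"
proof -
  assume e: "0 < e"
  have "(\<lambda>k. C / 2^k) \<longlonglongrightarrow> 0" by (rule LIMSEQ_divide_realpow_zero) simp
  then have "eventually (\<lambda>k. C / 2^k < e) sequentially" using e by (rule order_tendstoD)
  then show ?thesis unfolding eventually_sequentially dk_def by simp
qed

lemma Pk_Inter:
  assumes X: "compact (X::(real^'n) set)" "X \<noteq> {}"
  shows "(\<Inter>k. Pk (dk k) X) = X"
proof
  show "X \<subseteq> (\<Inter>k. Pk (dk k) X)" using subset_Pk[OF dk_pos] by blast
  show "(\<Inter>k. Pk (dk k) X) \<subseteq> X"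
  proof
    fix y assume y: "y \<in> (\<Inter>k. Pk (dk k) X)"
    have b: "infdist y X \<le> real CARD('n) * dk k" for k
    proof -
      obtain x where x: "x \<in> X" "\<forall>i. Rd (dk k) (x$i) (y$i)" using y unfolding Pk_def by blast
      show ?thesis using infdist_le[OF x(1), of y] Pk_dist[OF dk_pos x(2)] by linarith
    qed
    have "infdist y X = 0"
    proof (rule ccontr)
      assume "infdist y X \<noteq> 0"
      then have "0 < infdist y X" using infdist_nonneg[of y X] by linarith
      then obtain K where "\<forall>k\<ge>K. real CARD('n) * dk k < infdist y X" using dk_small by blast
      then show False using b[of K] by auto
    qed
    then have "y \<in> closure X" using in_closure_iff_infdist_zero[OF X(2)] by blast
    then show "y \<in> X" using X(1) by (simp add: compact_imp_closed closure_closed)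
  qed
qed

lemma vol_Pk_lim:
  assumes X: "compact (X::(real^'n) set)" "X \<noteq> {}"
  shows "(\<lambda>k. measure lebesgue (Pk (dk k) X)) \<longlonglongrightarrow> measure lebesgue X"
proof -
  have lm: "Pk (dk k) X \<in> lmeasurable" for k by (rule lmeasurable_compact[OF Pk_compact[OF dk_pos X(1)]])
  have "(\<lambda>k. measure lebesgue (Pk (dk k) X)) \<longlonglongrightarrow> measure lebesgue (\<Inter>k. Pk (dk k) X)"
  proof (rule Lim_measure_decseq)
    show "range (\<lambda>k. Pk (dk k) X) \<subseteq> sets lebesgue" using lm by (auto simp: fmeasurable_def)
    show "decseq (\<lambda>k. Pk (dk k) X)" by (rule Pk_decseq)
    show "emeasure lebesgue (Pk (dk k) X) \<noteq> \<infinity>" for k using lm[of k] by (auto simp: fmeasurable_def)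
  qed
  then show ?thesis using Pk_Inter[OF X] by simp
qed

definition cube :: "real^'n \<Rightarrow> real \<Rightarrow> (real^'n) set" where
  "cube v \<delta> = bx (\<lambda>i. v$i) (\<lambda>i. v$i + \<delta>)"

lemma cube_Cn: "cube v \<delta> \<in> Cn" unfolding cube_def bx_cbox by (rule Cn_cbox)

lemma cube_transl: "cube v \<delta> = (\<lambda>x. x + v) ` cube 0 \<delta>"
proof
  show "cube v \<delta> \<subseteq> (\<lambda>x. x + v) ` cube 0 \<delta>"
  proof
    fix y assume "y \<in> cube v \<delta>"
    then have H: "\<forall>i. v$i \<le> y$i \<and> y$i \<le> v$i + \<delta>" by (simp add: cube_def bx_def)
    have "\<forall>i. (0::real^_)$i \<le> (y-v)$i \<and> (y-v)$i \<le> (0::real^_)$i + \<delta>"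
    proof
      fix i show "(0::real^_)$i \<le> (y-v)$i \<and> (y-v)$i \<le> (0::real^_)$i + \<delta>" using H[rule_format, of i] by (simp; linarith)
    qed
    then have "y - v \<in> cube 0 \<delta>" by (simp add: cube_def bx_def)
    moreover have "y = (y - v) + v" by simp
    ultimately show "y \<in> (\<lambda>x. x + v) ` cube 0 \<delta>" by blast
  qed
  show "(\<lambda>x. x + v) ` cube 0 \<delta> \<subseteq> cube v \<delta>" by (auto simp: cube_def bx_def)
qed

lemma vol_cube: assumes "0 \<le> \<delta>" shows "measure lebesgue (cube (v::real^'n) \<delta>) = \<delta> ^ CARD('n)"
proof -
  have e: "cube v \<delta> = cbox (\<chi> i. v$i) (\<chi> i. v$i + \<delta>)" unfolding cube_def bx_cbox ..
  have ne: "cbox (\<chi> i. v$i) (\<chi> i. v$i + \<delta>) \<noteq> {}" using assms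
    by (auto simp: cbox_def Basis_vec_def cart_eq_inner_axis[symmetric] inner_axis' intro!: exI[of _ v])
  have "measure lebesgue (cube v \<delta>) = measure lborel (cbox (\<chi> i. v$i) (\<chi> i. v$i + \<delta>))"
    unfolding e by (simp add: lmeasurable_cbox)
  also have "\<dots> = (\<Prod>i\<in>(UNIV::'n set). \<delta>)" using content_cbox_cart[OF ne] by simp
  finally show ?thesis by simp
qed

lemma psi_cube:
  assumes val: "valuation \<psi>" and sim: "simple_valuation \<psi>" and ti: "translation_invariant \<psi>"
  shows "\<psi> (cube (v::real^'n) (dk k)) = \<psi> (cube 0 1) * dk k ^ CARD('n)"
proof -
  let ?d = "dk k" and ?N = "2^k :: nat"
  have d0: "0 \<le> ?d" using dk_pos[of k] by simp
  have dN: "?d * real ?N = 1" by (simp add: dk_def)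
  have tr: "\<psi> (cube w ?d) = \<psi> (cube 0 ?d)" for w :: "real^'n"
    using ti cube_Cn unfolding translation_invariant_def cube_transl[of w] by blast
  have sub: "cube 0 1 \<subseteq> bx (\<lambda>i. (0::real^'n)$i) (\<lambda>i. (0::real^'n)$i + ?d * real ?N)"
    using dN by (simp add: cube_def)
  have N1: "?N \<ge> 1" by simp
  have "\<psi> (cube 0 1) = (\<Sum>m\<in>{m. \<forall>i. m i < ?N}. \<psi> (cube 0 1 \<inter> cell (0::real^'n) ?d m))"
    by (rule grid[OF cutadd_psi[OF val sim] cube_Cn sub d0 N1])
  also have "\<dots> = (\<Sum>m\<in>{m::'n\<Rightarrow>nat. \<forall>i. m i < ?N}. \<psi> (cube (0::real^'n) ?d))"
  proof (rule sum.cong[OF refl])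
    fix m :: "'n \<Rightarrow> nat" assume m: "m \<in> {m. \<forall>i. m i < ?N}"
    have le: "?d * (real (m i) + 1) \<le> 1" for i
    proof -
      have "Suc (m i) \<le> ?N" using m by (simp add: Suc_le_eq)
      then have "real (Suc (m i)) \<le> real ?N" by (simp only: of_nat_le_iff)
      then have "real (m i) + 1 \<le> real ?N" by simp
      then have "?d * (real (m i) + 1) \<le> ?d * real ?N" using d0 by (rule mult_left_mono)
      then show ?thesis using dN by simp
    qed
    have nn: "0 \<le> ?d * real (m i)" for i using d0 by simp
    have "cell 0 ?d m \<subseteq> cube 0 1"
    proof
      fix x :: "real^'n" assume "x \<in> cell 0 ?d m"
      then have H: "\<forall>i. ?d * real (m i) \<le> x$i \<and> x$i \<le> ?d * (real (m i) + 1)" by (simp add: cell_def bx_def)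
      have "\<forall>i. 0 \<le> x$i \<and> x$i \<le> 1"
      proof
        fix i show "0 \<le> x$i \<and> x$i \<le> 1" using H[rule_format, of i] nn[of i] le[of i] by linarith
      qed
      then show "x \<in> cube 0 1" by (simp add: cube_def bx_def)
    qed
    then have "cube 0 1 \<inter> cell 0 ?d m = cell 0 ?d m" by blast
    also have "\<dots> = cube (\<chi> i. ?d * real (m i)) ?d"
      by (simp add: cube_def cell_def algebra_simps)
    finally show "\<psi> (cube 0 1 \<inter> cell 0 ?d m) = \<psi> (cube 0 ?d)" using tr by simp
  qed
  also have "\<dots> = real (card {m::'n \<Rightarrow> nat. \<forall>i. m i < ?N}) * \<psi> (cube 0 ?d)" by simp
  also have "card {m::'n \<Rightarrow> nat. \<forall>i. m i < ?N} = ?N ^ CARD('n)"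
  proof -
    have "{m::'n \<Rightarrow> nat. \<forall>i. m i < ?N} = PiE UNIV (\<lambda>_. {..<?N})" by (auto simp: PiE_UNIV_domain Pi_def)
    then show ?thesis by (simp add: card_PiE)
  qed
  finally have "\<psi> (cube 0 1) = real (?N ^ CARD('n)) * \<psi> (cube 0 ?d)" .
  then have "\<psi> (cube 0 ?d) = \<psi> (cube 0 1) * ?d ^ CARD('n)"
    by (simp add: dk_def power_divide power_mult[symmetric] field_simps)
  then show ?thesis using tr by simp
qed

lemma Rd_cell:
  assumes d: "0 < \<delta>" and R: "Rd \<delta> s u" and u: "of_int j * \<delta> < u" "u < (of_int j + 1) * \<delta>"
    and w: "of_int j * \<delta> \<le> w" "w \<le> (of_int j + 1) * \<delta>"
  shows "Rd \<delta> s w"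
proof -
  obtain k :: int where k: "of_int k \<le> s/\<delta>" "s/\<delta> \<le> of_int k + 1" "of_int k \<le> u/\<delta>" "u/\<delta> \<le> of_int k + 1"
    using R unfolding Rd_def R1_def by blast
  have u': "of_int j < u/\<delta>" "u/\<delta> < of_int j + 1" using u d by (simp_all add: pos_less_divide_eq pos_divide_less_eq)
  have w': "of_int j \<le> w/\<delta>" "w/\<delta> \<le> of_int j + 1" using w d by (simp_all add: pos_le_divide_eq pos_divide_le_eq)
  have "real_of_int k < real_of_int (j + 1)" using k u' by simp
  then have "k < j + 1" by (simp only: of_int_less_iff)
  moreover have "real_of_int j < real_of_int (k + 1)" using k u' by simp
  then have "j < k + 1" by (simp only: of_int_less_iff)
  ultimately have "k = j" by simp
  then show ?thesis unfolding Rd_def R1_def using k w' by (intro exI[of _ j]) auto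
qed

lemma finite_hyps: "finite ((\<lambda>i::'n::finite. (i, f i)) ` UNIV \<union> (\<lambda>i. (i, g i)) ` UNIV)" by simp

lemma negligible_hyps:
  assumes "finite H"
  shows "negligible {x::real^'n. \<exists>(i,t)\<in>H. x$i = t}"
proof -
  have "{x::real^'n. \<exists>(i,t)\<in>H. x$i = t} = \<Union>((\<lambda>(i,t). {x::real^'n. x$i = t}) ` H)" by auto
  moreover have "negligible (\<Union>((\<lambda>(i,t). {x::real^'n. x$i = t}) ` H))"
    using assms by (intro negligible_Union) (auto simp: negligible_hyp)
  ultimately show ?thesis by simp
qed

lemma psi_Pk:
  assumes val: "valuation \<psi>" and sim: "simple_valuation \<psi>" and con: "hausdorff_continuous \<psi>"
    and ti: "translation_invariant \<psi>" and X: "X \<in> Cn"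
  shows "\<psi> (Pk (dk k) X) = \<psi> (cube 0 1) * measure lebesgue (Pk (dk k) (X::(real^'n) set))"
proof -
  let ?d = "dk k" and ?c = "\<psi> (cube 0 1)"
  let ?P = "Pk ?d X"
  have d: "0 < ?d" by (rule dk_pos)
  have cX: "compact X" using X by (simp add: Cn_def)
  have PC: "?P \<in> Cn" by (rule Pk_Cn[OF d X])
  obtain B where B: "\<forall>x\<in>X. norm x \<le> B" using compact_imp_bounded[OF cX] unfolding bounded_iff by blast
  define N0 where "N0 = nat \<lceil>(\<bar>B\<bar> + ?d) / ?d\<rceil> + 1"
  have N0: "\<bar>B\<bar> + ?d \<le> real N0 * ?d"
  proof -
    have "(\<bar>B\<bar> + ?d) / ?d \<le> real N0" unfolding N0_def by linarith
    then show ?thesis using d by (simp add: pos_divide_le_eq)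
  qed
  define a :: "real^'n" where "a = (\<chi> i. - (real N0 * ?d))"
  define N where "N = 2 * N0"
  have N1: "N \<ge> 1" unfolding N_def N0_def by simp
  have Psub: "?P \<subseteq> bx (\<lambda>i. a$i) (\<lambda>i. a$i + ?d * real N)"
  proof
    fix y assume "y \<in> ?P"
    then obtain x where x: "x \<in> X" "\<forall>i. Rd ?d (x$i) (y$i)" unfolding Pk_def by blast
    have "\<forall>i. a$i \<le> y$i \<and> y$i \<le> a$i + ?d * real N"
    proof
      fix i
      have "\<bar>x$i - y$i\<bar> \<le> ?d" using Rd_dist[OF d] x(2) by blast
      moreover have "\<bar>x$i\<bar> \<le> \<bar>B\<bar>" using component_le_norm_cart[of x i] B x(1) by force
      ultimately show "a$i \<le> y$i \<and> y$i \<le> a$i + ?d * real N" using N0 by (simp add: a_def N_def algebra_simps; linarith)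
    qed
    then show "y \<in> bx (\<lambda>i. a$i) (\<lambda>i. a$i + ?d * real N)" by (simp add: bx_def)
  qed
  have each: "\<psi> (?P \<inter> cell a ?d m) = ?c * measure lebesgue (?P \<inter> cell a ?d m)" for m
  proof -
    let ?Y = "?P \<inter> cell a ?d m"
    define lo where "lo = (\<lambda>i. a$i + ?d * real (m i))"
    define j where "j = (\<lambda>i. int (m i) - int N0)"
    have lo_j: "lo i = of_int (j i) * ?d" for i by (simp add: lo_def j_def a_def algebra_simps)
    have cell_eq: "cell a ?d m = bx lo (\<lambda>i. lo i + ?d)" by (simp add: cell_def lo_def algebra_simps)
    have YC: "?Y \<in> Cn" by (rule Cn_Int[OF PC]) (simp_all add: cell_eq bx_cbox cclosed_cbox closed_cbox)
    show ?thesis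
    proof (cases "\<exists>y\<in>?Y. \<forall>i. lo i < y$i \<and> y$i < lo i + ?d")
      case True
      then obtain y where y: "y \<in> ?P" "\<forall>i. lo i < y$i \<and> y$i < lo i + ?d" by blast
      then obtain x where x: "x \<in> X" "\<forall>i. Rd ?d (x$i) (y$i)" unfolding Pk_def by blast
      have "cell a ?d m \<subseteq> ?P"
      proof
        fix w assume "w \<in> cell a ?d m"
        then have w: "\<forall>i. lo i \<le> w$i \<and> w$i \<le> lo i + ?d" by (simp add: cell_eq bx_def)
        have "\<forall>i. Rd ?d (x$i) (w$i)"
        proof
          fix i
          have e: "lo i + ?d = (of_int (j i) + 1) * ?d" by (simp add: lo_j algebra_simps)
          show "Rd ?d (x$i) (w$i)"
            using Rd_cell[OF d x(2)[rule_format, of i], of "j i" "w$i"] y(2)[rule_format, of i] w[rule_format, of i]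
            by (simp add: lo_j distrib_right)
        qed
        then show "w \<in> ?P" using x(1) unfolding Pk_def by blast
      qed
      then have "?Y = cube (\<chi> i. lo i) ?d" by (auto simp: cell_eq cube_def)
      moreover have "measure lebesgue (cube (\<chi> i. lo i) ?d) = ?d ^ CARD('n)"
        using vol_cube[of ?d "(\<chi> i. lo i)::real^'n"] d by simp
      ultimately show ?thesis using psi_cube[OF val sim ti, of "(\<chi> i. lo i)::real^'n" k] by simp
    next
      case False
      define H where "H = (\<lambda>i. (i, lo i)) ` UNIV \<union> (\<lambda>i. (i, lo i + ?d)) ` UNIV"
      have fH: "finite H" unfolding H_def by (rule finite_hyps)
      have sub: "?Y \<subseteq> {x::real^'n. \<exists>(i,t)\<in>H. x$i = t}"
      proof
        fix y assume yY: "y \<in> ?Y"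
        then have yc: "\<forall>i. lo i \<le> y$i \<and> y$i \<le> lo i + ?d" by (simp add: cell_eq bx_def)
        obtain i where "\<not> (lo i < y$i \<and> y$i < lo i + ?d)" using False yY by blast
        then have "y$i = lo i \<or> y$i = lo i + ?d" using yc[rule_format, of i] by linarith
        then show "y \<in> {x::real^'n. \<exists>(i,t)\<in>H. x$i = t}" unfolding H_def by auto
      qed
      have "\<psi> ?Y = 0" using psi_zero_hyps[OF val sim con fH] YC sub by blast
      moreover have "measure lebesgue ?Y = 0"
        by (rule negligible_imp_measure0[OF negligible_subset[OF negligible_hyps[OF fH] sub]])
      ultimately show ?thesis by simp
    qed
  qed
  have "\<psi> ?P = (\<Sum>m\<in>{m. \<forall>i. m i < N}. \<psi> (?P \<inter> cell a ?d m))"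
    by (rule grid[OF cutadd_psi[OF val sim] PC Psub less_imp_le[OF d] N1])
  also have "\<dots> = (\<Sum>m\<in>{m. \<forall>i. m i < N}. ?c * measure lebesgue (?P \<inter> cell a ?d m))"
    using each by simp
  also have "\<dots> = ?c * (\<Sum>m\<in>{m. \<forall>i. m i < N}. measure lebesgue (?P \<inter> cell a ?d m))"
    by (simp add: sum_distrib_left)
  also have "(\<Sum>m\<in>{m. \<forall>i. m i < N}. measure lebesgue (?P \<inter> cell a ?d m)) = measure lebesgue ?P"
    by (rule grid[OF cutadd_vol PC Psub less_imp_le[OF d] N1, symmetric])
  finally show ?thesis .
qed

theorem proposition5p3:
  fixes \<psi> :: "(real ^ 'n) set \<Rightarrow> real"
  assumes "valuation \<psi>"
    and "simple_valuation \<psi>"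
    and "hausdorff_continuous \<psi>"
    and "translation_invariant \<psi>"
  shows "\<exists>c::real. \<forall>X\<in>Cn. \<psi> X = c * measure lebesgue X"
proof (intro exI[of _ "\<psi> (cube 0 1)"] ballI)
  fix X :: "(real^'n) set" assume X: "X \<in> Cn"
  let ?c = "\<psi> (cube 0 1)"
  show "\<psi> X = ?c * measure lebesgue X"
  proof (cases "X = {}")
    case True
    then show ?thesis using assms(1) unfolding valuation_def by simp
  next
    case False
    have cX: "compact X" using X by (simp add: Cn_def)
    let ?P = "\<lambda>k. Pk (dk k) X"
    have eq: "\<psi> (?P k) = ?c * measure lebesgue (?P k)" for k
      by (rule psi_Pk[OF assms X])
    have g: "(\<lambda>k. ?c * measure lebesgue (?P k)) \<longlonglongrightarrow> ?c * measure lebesgue X"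
      by (intro tendsto_mult tendsto_const vol_Pk_lim[OF cX False])
    have f: "(\<lambda>k. \<psi> (?P k)) \<longlonglongrightarrow> \<psi> X"
    proof (rule LIMSEQ_I)
      fix e :: real assume e: "0 < e"
      obtain d where d: "d > 0" and dH: "\<forall>Y\<in>Cn. Y \<noteq> {} \<longrightarrow> hausdorff_dist X Y < d \<longrightarrow> \<bar>\<psi> Y - \<psi> X\<bar> < e"
        using assms(3) X False e unfolding hausdorff_continuous_def by blast
      obtain K where K: "\<forall>k\<ge>K. real CARD('n) * dk k < d" using dk_small[OF d] by blast
      have "norm (\<psi> (?P k) - \<psi> X) < e" if "k \<ge> K" for k
      proof -
        have "hausdorff_dist X (?P k) < d"
          using Pk_hausdorff[OF dk_pos False, of k] K that by fastforce
        moreover have "?P k \<in> Cn" by (rule Pk_Cn[OF dk_pos X])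
        moreover have "?P k \<noteq> {}" using subset_Pk[OF dk_pos, of X k] False by blast
        ultimately show ?thesis using dH by simp
      qed
      then show "\<exists>K. \<forall>k\<ge>K. norm (\<psi> (?P k) - \<psi> X) < e" by blast
    qed
    have "(\<lambda>k. \<psi> (?P k)) \<longlonglongrightarrow> ?c * measure lebesgue X" using g eq by simp
    then show ?thesis using f LIMSEQ_unique by blast
  qed
qed

end
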